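(* Let $p>1$ and $1/p+1/q=1$. Let $\lambda>0$ and let $r,s$ be real numbers with $r+s=\lambda$. Let $k_\lambda:(0,\infty)\times(0,\infty)\to(0,\infty)$ be a measurable function homogeneous of degree $-\lambda$ (i.e. $k_\lambda(ux,uy)=u^{-\lambda}k_\lambda(x,y)$ for all $u,x,y>0$), and assume that $$k_\lambda(r):=\int_0^\infty k_\lambda(u,1)\,u^{r-1}\,du$$ is a (finite) positive number. Assume that the functions $u\mapsto k_\lambda(u,1)u^{r-1}$ and $u\mapsto k_\lambda(1,u)u^{s-1}$ are decreasing on $(0,\infty)$ and strictly decreasing on some subinterval of $(0,\infty)$. Let $a_n,b_n\ge 0$ ($n\ge1$) with $0<\sum_{n=1}^\infty a_n^p<\infty$ and $0<\sum_{n=1}^\infty b_n^q<\infty$, and let $A_n=\sum_{k=1}^n a_k$, $B_n=\sum_{k=1}^n b_k$. Then $$\sum_{n=1}^\infty\sum_{m=1}^\infty m^{r-\frac1q-1}n^{s-\frac1p-1}k_\lambda(m,n)A_mB_n< pq\,k_\lambda(r)\Big[\sum_{n=1}^\infty a_n^p\Big]^{1/p}\Big[\sum_{n=1}^\infty b_n^q\Big]^{1/q}$$ and $$\sum_{n=1}^\infty\Big[\sum_{m=1}^\infty m^{r-\frac1q-1}n^{s-\frac1p}k_\lambda(m,n)A_m\Big]^p<[q\,k_\lambda(r)]^p\sum_{n=1}^\infty a_n^p,$$ and the constant factors $pq\,k_\lambda(r)$ and $[q\,k_\lambda(r)]^p$ are the best possible.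
   Context: A measurable function $k_\lambda(x,y)$ on $(0,\infty)^2$ with $k_\lambda(ux,uy)=u^{-\lambda}k_\lambda(x,y)$ for all $u,x,y>0$ is called homogeneous of degree $-\lambda$. "Best possible" means that the inequality fails (for some admissible sequences) if the constant is replaced by any smaller positive constant. *)

theory Defs
  imports "HOL-Analysis.Analysis"
begin

definition kint :: "(real \<Rightarrow> real \<Rightarrow> real) \<Rightarrow> real \<Rightarrow> real" where
  "kint k r = (LINT u:{0<..}|lborel. k u 1 * u powr (r - 1))"

definition psum :: "(nat \<Rightarrow> real) \<Rightarrow> nat \<Rightarrow> real" where
  "psum a n = (\<Sum>k=1..n. a k)"

definition decr_strict_somewhere :: "(real \<Rightarrow> real) \<Rightarrow> bool" where
  "decr_strict_somewhere f \<longleftrightarrow>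
     (\<forall>x y. 0 < x \<and> x \<le> y \<longrightarrow> f y \<le> f x) \<and>
     (\<exists>c d. 0 < c \<and> c < d \<and> (\<forall>x y. c \<le> x \<and> x < y \<and> y \<le> d \<longrightarrow> f y < f x))"

definition admissible :: "real \<Rightarrow> (nat \<Rightarrow> real) \<Rightarrow> bool" where
  "admissible p a \<longleftrightarrow> (\<forall>n\<ge>1. a n \<ge> 0) \<and>
     (\<lambda>n. a n powr p) summable_on {1..} \<and> infsum (\<lambda>n. a n powr p) {1..} > 0"

definition ineq1 :: "(real \<Rightarrow> real \<Rightarrow> real) \<Rightarrow> real \<Rightarrow> real \<Rightarrow> real \<Rightarrow> real \<Rightarrow> real
    \<Rightarrow> (nat \<Rightarrow> real) \<Rightarrow> (nat \<Rightarrow> real) \<Rightarrow> bool" where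
  "ineq1 k p q r s C a b \<longleftrightarrow>
     (let t = (\<lambda>(m,n). real m powr (r - 1/q - 1) * real n powr (s - 1/p - 1)
                        * k (real m) (real n) * psum a m * psum b n)
      in t summable_on ({1..} \<times> {1..}) \<and>
         infsum t ({1..} \<times> {1..}) <
           C * (infsum (\<lambda>n. a n powr p) {1..}) powr (1/p)
             * (infsum (\<lambda>n. b n powr q) {1..}) powr (1/q))"

definition ineq2 :: "(real \<Rightarrow> real \<Rightarrow> real) \<Rightarrow> real \<Rightarrow> real \<Rightarrow> real \<Rightarrow> real \<Rightarrow> real
    \<Rightarrow> (nat \<Rightarrow> real) \<Rightarrow> bool" where
  "ineq2 k p q r s C a \<longleftrightarrow>
     (let t = (\<lambda>n m. real m powr (r - 1/q - 1) * real n powr (s - 1/p)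
                      * k (real m) (real n) * psum a m)
      in (\<forall>n\<ge>1. t n summable_on {1..}) \<and>
         (\<lambda>n. (infsum (t n) {1..}) powr p) summable_on {1..} \<and>
         infsum (\<lambda>n. (infsum (t n) {1..}) powr p) {1..} <
           C * infsum (\<lambda>n. a n powr p) {1..})"

end

theory Submission
  imports Defs
begin

lemma conj_q:
  fixes p q :: real assumes p: "p > 1" and pq: "1/p + 1/q = 1"
  shows "q > 1" "q = p/(p-1)" "1/q = 1 - 1/p" "p/q = p - 1" "q/p = q - 1"
proof -
  have iq: "1/q = (p-1)/p" using pq p by (simp add: field_simps)
  have "q = 1 / (1/q)" by simp
  also have "\<dots> = p/(p-1)" using iq by simp
  finally have q: "q = p/(p-1)" .
  show "q = p/(p-1)" by fact
  show "q > 1" using p unfolding q by (simp add: field_simps)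
  show "1/q = 1 - 1/p" using pq by simp
  show "p/q = p - 1" using p unfolding q by (simp add: field_simps)
  show "q/p = q - 1" using p unfolding q by (simp add: field_simps)
qed

lemma nat_summable_bound:
  fixes f :: "nat \<Rightarrow> real"
  assumes nn: "\<And>n. n \<ge> 1 \<Longrightarrow> f n \<ge> 0" and bd: "\<And>N. (\<Sum>n=1..N. f n) \<le> B"
  shows "f summable_on {1..}" "infsum f {1..} \<le> B"
proof -
  have fin: "sum f F \<le> B" if "finite F" "F \<subseteq> {1..}" for F
  proof (cases "F = {}")
    case True then show ?thesis using bd[of 0] by simp
  next
    case False
    have "F \<subseteq> {1..Max F}" using that False by auto
    then have "sum f F \<le> sum f {1..Max F}"
      by (intro sum_mono2) (use nn in auto)
    also have "\<dots> \<le> B" by (rule bd)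
    finally show ?thesis .
  qed
  show sm: "f summable_on {1..}"
    by (rule nonneg_bdd_above_summable_on) (use nn fin in \<open>auto intro!: bdd_aboveI2\<close>)
  show "infsum f {1..} \<le> B"
    by (rule infsum_le_finite_sums[OF sm]) (use fin in auto)
qed

lemma partial_le_infsum:
  fixes f :: "nat \<Rightarrow> real"
  assumes "f summable_on {1..}" "\<And>n. n \<ge> 1 \<Longrightarrow> f n \<ge> 0"
  shows "(\<Sum>n=1..N. f n) \<le> infsum f {1..}"
  by (rule finite_sum_le_infsum) (use assms in auto)

lemma holder_finite:
  fixes x y :: "'a \<Rightarrow> real"
  assumes p: "p > 1" and pq: "1/p + 1/q = 1" and F: "finite F"
    and x: "\<And>i. i \<in> F \<Longrightarrow> x i \<ge> 0" and y: "\<And>i. i \<in> F \<Longrightarrow> y i \<ge> 0"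
  shows "(\<Sum>i\<in>F. x i * y i) \<le> (\<Sum>i\<in>F. x i powr p) powr (1/p) * (\<Sum>i\<in>F. y i powr q) powr (1/q)"
proof -
  have q: "q > 1" using conj_q[OF p pq] by simp
  define X where "X = (\<Sum>i\<in>F. x i powr p)"
  define Y where "Y = (\<Sum>i\<in>F. y i powr q)"
  have X0: "X \<ge> 0" "Y \<ge> 0" unfolding X_def Y_def by (auto intro: sum_nonneg)
  show ?thesis
  proof (cases "X = 0 \<or> Y = 0")
    case True
    then have "\<forall>i\<in>F. x i = 0 \<or> y i = 0"
      using F x y unfolding X_def Y_def by (subst (asm) sum_nonneg_eq_0_iff; auto)+
    then have "(\<Sum>i\<in>F. x i * y i) = 0" by (intro sum.neutral) auto
    then show ?thesis using X0 unfolding X_def Y_def by simp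
  next
    case False
    then have Xp: "X > 0" "Y > 0" using X0 by auto
    define u where "u i = x i / X powr (1/p)" for i
    define v where "v i = y i / Y powr (1/q)" for i
    have uv: "u i * v i \<le> u i powr p / p + v i powr q / q" if "i \<in> F" for i
      by (rule Youngs_inequality[OF p q pq]) (use that x y Xp in \<open>auto simp: u_def v_def\<close>)
    have up: "u i powr p = x i powr p / X" if "i \<in> F" for i
      using that x Xp p by (simp add: u_def powr_divide powr_powr)
    have vq: "v i powr q = y i powr q / Y" if "i \<in> F" for i
      using that y Xp q by (simp add: v_def powr_divide powr_powr)
    have "(\<Sum>i\<in>F. u i * v i) \<le> (\<Sum>i\<in>F. u i powr p / p + v i powr q / q)"
      by (rule sum_mono) (rule uv)
    also have "\<dots> = (\<Sum>i\<in>F. x i powr p) / X / p + (\<Sum>i\<in>F. y i powr q) / Y / q"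
      by (simp add: sum.distrib up vq sum_divide_distrib)
    also have "\<dots> = 1" using Xp pq unfolding X_def Y_def by simp
    finally have "(\<Sum>i\<in>F. u i * v i) \<le> 1" .
    moreover have "(\<Sum>i\<in>F. u i * v i) = (\<Sum>i\<in>F. x i * y i) / (X powr (1/p) * Y powr (1/q))"
      by (simp add: u_def v_def sum_divide_distrib)
    ultimately show ?thesis using Xp unfolding X_def[symmetric] Y_def[symmetric]
      by (simp add: divide_le_eq)
  qed
qed

lemma holder_infsum:
  fixes x y :: "'a \<Rightarrow> real"
  assumes p: "p > 1" and pq: "1/p + 1/q = 1"
    and x: "\<And>i. i \<in> A \<Longrightarrow> x i \<ge> 0" and y: "\<And>i. i \<in> A \<Longrightarrow> y i \<ge> 0"
    and sx: "(\<lambda>i. x i powr p) summable_on A" and sy: "(\<lambda>i. y i powr q) summable_on A"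
  shows "(\<lambda>i. x i * y i) summable_on A"
    "infsum (\<lambda>i. x i * y i) A \<le> (infsum (\<lambda>i. x i powr p) A) powr (1/p) * (infsum (\<lambda>i. y i powr q) A) powr (1/q)"
proof -
  have fin: "(\<Sum>i\<in>F. x i * y i) \<le> (infsum (\<lambda>i. x i powr p) A) powr (1/p) * (infsum (\<lambda>i. y i powr q) A) powr (1/q)"
    if F: "finite F" "F \<subseteq> A" for F
  proof -
    have "(\<Sum>i\<in>F. x i * y i) \<le> (\<Sum>i\<in>F. x i powr p) powr (1/p) * (\<Sum>i\<in>F. y i powr q) powr (1/q)"
      by (rule holder_finite[OF p pq F(1)]) (use F x y in auto)
    also have "\<dots> \<le> (infsum (\<lambda>i. x i powr p) A) powr (1/p) * (infsum (\<lambda>i. y i powr q) A) powr (1/q)"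
    proof (intro mult_mono powr_mono2)
      show "(\<Sum>i\<in>F. x i powr p) \<le> infsum (\<lambda>i. x i powr p) A"
        by (rule finite_sum_le_infsum[OF sx F]) auto
      show "(\<Sum>i\<in>F. y i powr q) \<le> infsum (\<lambda>i. y i powr q) A"
        by (rule finite_sum_le_infsum[OF sy F]) auto
    qed (use p conj_q[OF p pq] in \<open>auto intro: sum_nonneg\<close>)
    finally show ?thesis .
  qed
  show sm: "(\<lambda>i. x i * y i) summable_on A"
    by (rule nonneg_bdd_above_summable_on) (use x y fin in \<open>auto intro!: bdd_aboveI2\<close>)
  show "infsum (\<lambda>i. x i * y i) A \<le> (infsum (\<lambda>i. x i powr p) A) powr (1/p) * (infsum (\<lambda>i. y i powr q) A) powr (1/q)"
    by (rule infsum_le_finite_sums[OF sm]) (use fin in auto)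
qed

lemma ln_less_minus_one: fixes x :: real assumes "x > 0" "x \<noteq> 1" shows "ln x < x - 1"
proof -
  have s: "sqrt x > 0" "sqrt x \<noteq> 1" using assms by auto
  have "ln x = 2 * ln (sqrt x)" using assms by (simp add: ln_sqrt)
  also have "\<dots> \<le> 2 * (sqrt x - 1)" using ln_le_minus_one[OF s(1)] by simp
  also have "\<dots> < x - 1"
  proof -
    have "(sqrt x - 1)^2 > 0" using s by simp
    then show ?thesis using assms by (simp add: power2_eq_square algebra_simps)
  qed
  finally show ?thesis .
qed

lemma amgm_strict:
  fixes a b w :: real assumes "a > 0" "b > 0" "a \<noteq> b" "0 < w" "w < 1"
  shows "a powr w * b powr (1 - w) < w * a + (1 - w) * b"
proof -
  define M where "M = w * a + (1 - w) * b"
  have M: "M > 0" unfolding M_def using assms by (intro add_pos_pos) auto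
  have aM: "a \<noteq> M"
  proof
    assume "a = M"
    then have "(1 - w) * (a - b) = 0" unfolding M_def by (simp add: algebra_simps)
    moreover have "(1 - w) * (a - b) \<noteq> 0" using assms by simp
    ultimately show False by blast
  qed
  have bM: "b \<noteq> M"
  proof
    assume "b = M"
    then have "w * (a - b) = 0" unfolding M_def by (auto simp: algebra_simps)
    moreover have "w * (a - b) \<noteq> 0" using assms by simp
    ultimately show False by blast
  qed
  have l1: "ln (a / M) < a / M - 1" using aM M assms by (intro ln_less_minus_one) auto
  have l2: "ln (b / M) < b / M - 1" using bM M assms by (intro ln_less_minus_one) auto
  have "w * ln (a/M) + (1 - w) * ln (b/M) < w * (a/M - 1) + (1 - w) * (b/M - 1)"
    using l1 l2 assms by (intro add_strict_mono mult_strict_left_mono) auto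
  also have "\<dots> = 0" using M unfolding M_def by (simp add: field_simps)
  finally have "w * ln a + (1 - w) * ln b < ln M"
    using assms M by (simp add: ln_div algebra_simps)
  then have "exp (w * ln a + (1 - w) * ln b) < M" using M by (metis exp_less_cancel_iff exp_ln)
  then show ?thesis using assms unfolding M_def by (simp add: powr_def exp_add)
qed

lemma young_strict:
  fixes x y P :: real assumes P: "P > 1" and xy: "x \<ge> 0" "y \<ge> 0" "x \<noteq> y"
  shows "x powr (P - 1) * y < ((P - 1) * x powr P + y powr P) / P"
proof (cases "x = 0 \<or> y = 0")
  case True
  then show ?thesis using P xy by (auto intro!: divide_pos_pos mult_pos_pos)
next
  case False
  then have xp: "x > 0" "y > 0" using xy by auto
  have ne: "x powr P \<noteq> y powr P"
  proof
    assume "x powr P = y powr P"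
    then have "(x powr P) powr (1/P) = (y powr P) powr (1/P)" by simp
    then show False using xp P xy(3) by (simp add: powr_powr)
  qed
  have "(x powr P) powr ((P-1)/P) * (y powr P) powr (1 - (P-1)/P)
      < (P-1)/P * x powr P + (1 - (P-1)/P) * y powr P"
    using P xp ne by (intro amgm_strict) auto
  moreover have "(x powr P) powr ((P-1)/P) = x powr (P - 1)" using P by (simp add: powr_powr)
  moreover have "(y powr P) powr (1 - (P-1)/P) = y" using P xp
    by (simp add: powr_powr field_simps)
  moreover have "(P-1)/P * x powr P + (1 - (P-1)/P) * y powr P = ((P - 1) * x powr P + y powr P) / P"
    using P by (simp add: field_simps)
  ultimately show ?thesis by simp
qed

lemma young_nonstrict:
  fixes x y P :: real assumes P: "P > 1" and xy: "x \<ge> 0" "y \<ge> 0"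
  shows "x powr (P - 1) * y \<le> ((P - 1) * x powr P + y powr P) / P"
proof (cases "x = y")
  case True
  have "y powr P = y powr (1 + (P - 1))" by simp
  also have "\<dots> = y * y powr (P - 1)" using xy powr_add[of y 1 "P - 1"] by simp
  finally show ?thesis using True P by (simp add: field_simps)
qed (use young_strict[OF P xy] in auto)

lemma psum_nonneg: "(\<And>n. n \<ge> 1 \<Longrightarrow> a n \<ge> 0) \<Longrightarrow> psum a n \<ge> 0"
  unfolding psum_def by (intro sum_nonneg) auto

lemma psum_Suc: "psum a (Suc n) = psum a n + a (Suc n)"
  unfolding psum_def by simp

lemma psum_0[simp]: "psum a 0 = 0"
  unfolding psum_def by simp

lemma hardy_identity:
  fixes X Z x W y P Q n j :: real
  assumes P: "P > 1" and Q: "Q = P/(P-1)" and XZ: "X = Z * x" and n: "n = j + 1"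
  shows "X - Q * Z * (n * x - j * y) = (j * W - n * X)/(P-1) - Q * j * (((P-1)*X + W)/P - Z * y)"
proof -
  have P1: "P - 1 \<noteq> 0" "P \<noteq> 0" using P by auto
  have "Q * (P - 1) = P" using P1 unfolding Q by simp
  have e1: "Q * j * ((P-1)*X/P) = j * X" using P1 unfolding Q by (simp add: field_simps)
  have e2: "Q * j * (W/P) = j * W / (P-1)" using P1 unfolding Q by (simp add: field_simps)
  have e3: "X - Q * n * X = - n * X / (P-1) - j * X"
    using P1 unfolding Q n by (simp add: field_simps)
  have "(j * W - n * X)/(P-1) - Q * j * (((P-1)*X + W)/P - Z * y)
      = (j * W - n * X)/(P-1) - Q * j * ((P-1)*X/P) - Q * j * (W/P) + Q * j * Z * y"
    by (simp add: add_divide_distrib diff_divide_distrib algebra_simps)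
  also have "\<dots> = - n * X / (P-1) - j * X + Q * j * Z * y" unfolding e1 e2
    by (simp add: diff_divide_distrib)
  also have "\<dots> = X - Q * n * X + Q * j * Z * y" using e3 by simp
  also have "\<dots> = X - Q * Z * (n * x - j * y)" unfolding XZ by (simp add: algebra_simps)
  finally show ?thesis by simp
qed

lemma powr_Pm1_mult: fixes x P :: real assumes "x \<ge> 0" shows "x powr (P - 1) * x = x powr P"
proof -
  have "x powr P = x powr ((P - 1) + 1)" by simp
  also have "\<dots> = x powr (P - 1) * x" using assms powr_add[of x "P - 1" 1] by simp
  finally show ?thesis by simp
qed

lemma const_summable_zero:
  fixes c :: real
  assumes "(\<lambda>n::nat. c) summable_on {1..}" "c \<ge> 0"
  shows "c = 0"
proof (rule ccontr)
  assume "c \<noteq> 0"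
  then have c: "c > 0" using assms by simp
  define T where "T = infsum (\<lambda>n::nat. c) {1..}"
  obtain N :: nat where N: "real N > T / c" using reals_Archimedean2 by blast
  have "(\<Sum>n=1..N. c) \<le> T" unfolding T_def by (rule partial_le_infsum) (use assms in auto)
  then have "real N * c \<le> T" by simp
  then show False using N c by (simp add: field_simps)
qed

lemma div_trick:
  fixes S c d P Q :: real
  assumes P: "P > 1" and PQ: "1/P + 1/Q = 1" and S: "S > 0" and c: "c \<ge> 0"
    and le: "S \<le> Q * S powr (1/Q) * c - d"
  shows "S powr (1/P) \<le> Q * c - d / S powr (1/Q)"
proof -
  have Sq: "S powr (1/Q) > 0" using S by simp
  have "S = S powr (1/P) * S powr (1/Q)"
    using S PQ by (simp add: powr_add[symmetric])
  then have "S powr (1/P) * S powr (1/Q) \<le> (Q * c - d / S powr (1/Q)) * S powr (1/Q)"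
    using le Sq by (simp add: algebra_simps)
  then show ?thesis using Sq by simp
qed

lemma hardy_strict:
  fixes a :: "nat \<Rightarrow> real" and P Q :: real
  assumes P: "P > 1" and PQ: "1/P + 1/Q = 1" and adm: "admissible P a"
  shows "(\<lambda>n. (psum a n / real n) powr P) summable_on {1..}"
    and "infsum (\<lambda>n. (psum a n / real n) powr P) {1..} < Q powr P * infsum (\<lambda>n. a n powr P) {1..}"
proof -
  from adm have a0: "\<And>n. n \<ge> 1 \<Longrightarrow> a n \<ge> 0" and sa: "(\<lambda>n. a n powr P) summable_on {1..}"
    and Na: "infsum (\<lambda>n. a n powr P) {1..} > 0" unfolding admissible_def by auto
  have Q1: "Q > 1" and Qdef: "Q = P/(P-1)" using conj_q[OF P PQ] by auto
  have PQ': "1/Q + 1/P = 1" using PQ by simp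
  define al where "al n = psum a n / real n" for n
  define Nrm where "Nrm = infsum (\<lambda>n. a n powr P) {1..} powr (1/P)"
  have Nrm0: "Nrm > 0" unfolding Nrm_def using Na by simp
  have al0: "al n \<ge> 0" for n unfolding al_def using psum_nonneg[of a n] a0 by simp
  have alz: "al 0 = 0" unfolding al_def by simp
  have nal: "real n * al n = psum a n" for n
    unfolding al_def by (cases "n = 0") auto
  have aeq: "a (Suc j) = real (Suc j) * al (Suc j) - real j * al j" for j
    unfolding nal psum_Suc by simp
  define D where "D x y = ((P-1) * x powr P + y powr P)/P - x powr (P - 1) * y" for x y
  have D0: "D x y \<ge> 0" if "x \<ge> 0" "y \<ge> 0" for x y
    using young_nonstrict[OF P that] unfolding D_def by simp
  define E where "E n = al n powr P - Q * al n powr (P - 1) * a n" for n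
  have Eid: "E (Suc j) = (real j * al j powr P - real (Suc j) * al (Suc j) powr P)/(P-1)
       - Q * real j * D (al (Suc j)) (al j)" for j
    unfolding E_def D_def aeq
    by (rule hardy_identity[OF P Qdef]) (auto simp: powr_Pm1_mult[OF al0])
  define dd where "dd n = Q * (real n - 1) * D (al n) (al (n - 1))" for n
  have dd0: "dd n \<ge> 0" if "n \<ge> 1" for n
    unfolding dd_def using that Q1 D0[OF al0 al0] by (intro mult_nonneg_nonneg) auto
  have Esum: "(\<Sum>n=1..N. E n) = - (real N * al N powr P)/(P-1) - (\<Sum>n=1..N. dd n)" for N
  proof (induction N)
    case 0 then show ?case by (simp add: alz)
  next
    case (Suc N)
    have ddS: "dd (Suc N) = Q * real N * D (al (Suc N)) (al N)" by (simp add: dd_def)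
    have "(\<Sum>n=1..Suc N. E n) = (\<Sum>n=1..N. E n) + E (Suc N)" by simp
    also have "\<dots> = - (real (Suc N) * al (Suc N) powr P)/(P-1) - ((\<Sum>n=1..N. dd n) + dd (Suc N))"
      unfolding Suc Eid[of N] ddS by (simp add: add_divide_distrib diff_divide_distrib algebra_simps)
    finally show ?case by simp
  qed
  define S where "S N = (\<Sum>n=1..N. al n powr P)" for N
  define H where "H N = (\<Sum>n=1..N. al n powr (P - 1) * a n)" for N
  have SH: "S N \<le> Q * H N - (\<Sum>n=1..N. dd n)" for N
  proof -
    have "S N - Q * H N = (\<Sum>n=1..N. E n)"
      unfolding S_def H_def E_def by (simp add: sum_subtractf sum_distrib_left mult.assoc)
    also have "\<dots> \<le> - (\<Sum>n=1..N. dd n)" unfolding Esum using P al0[of N]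
      by (simp add: divide_nonneg_pos)
    finally show ?thesis by simp
  qed
  have S0: "S N \<ge> 0" for N unfolding S_def by (intro sum_nonneg) auto
  have Smono: "S N \<le> S M" if "N \<le> M" for N M
    unfolding S_def using that by (intro sum_mono2) auto
  have HS: "H N \<le> S N powr (1/Q) * Nrm" for N
  proof -
    have h1: "H N \<le> (\<Sum>n=1..N. (al n powr (P - 1)) powr Q) powr (1/Q) * (\<Sum>n=1..N. a n powr P) powr (1/P)"
      unfolding H_def by (rule holder_finite[OF Q1 PQ']) (use a0 al0 in auto)
    have h2: "(\<Sum>n=1..N. (al n powr (P - 1)) powr Q) = S N"
    proof -
      have "(P - 1) * Q = P" using P unfolding Qdef by (simp add: field_simps)
      then show ?thesis unfolding S_def by (simp add: powr_powr)
    qed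
    have h3: "(\<Sum>n=1..N. a n powr P) powr (1/P) \<le> Nrm"
      unfolding Nrm_def using P
      by (intro powr_mono2 partial_le_infsum[OF sa]) (auto intro: sum_nonneg)
    have h4: "S N powr (1/Q) * (\<Sum>n=1..N. a n powr P) powr (1/P) \<le> S N powr (1/Q) * Nrm"
      by (rule mult_left_mono[OF h3]) simp
    show ?thesis using h1 h4 unfolding h2 by linarith
  qed
  have main: "S N \<le> Q * S N powr (1/Q) * Nrm - (\<Sum>n=1..N. dd n)" for N
  proof -
    have "Q * H N \<le> Q * (S N powr (1/Q) * Nrm)" using HS[of N] Q1 by (intro mult_left_mono) auto
    then show ?thesis using SH[of N] by (simp add: mult.assoc)
  qed
  have bound1: "S N \<le> (Q * Nrm) powr P" for N
  proof (cases "S N = 0")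
    case True then show ?thesis by simp
  next
    case False
    then have Sp: "S N > 0" using S0[of N] by simp
    have "(\<Sum>n=1..N. dd n) \<ge> 0" using dd0 by (intro sum_nonneg) auto
    then have "S N powr (1/P) \<le> Q * Nrm - (\<Sum>n=1..N. dd n) / S N powr (1/Q)"
      using div_trick[OF P PQ Sp Nrm0[THEN less_imp_le] main] by simp
    also have "\<dots> \<le> Q * Nrm" using \<open>(\<Sum>n=1..N. dd n) \<ge> 0\<close> Sp by simp
    finally have "(S N powr (1/P)) powr P \<le> (Q * Nrm) powr P"
      using P by (intro powr_mono2) auto
    then show ?thesis using Sp P by (simp add: powr_powr)
  qed
  have QN: "(Q * Nrm) powr P = Q powr P * infsum (\<lambda>n. a n powr P) {1..}"
    using Q1 Na P unfolding Nrm_def by (simp add: powr_mult powr_powr)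
  have sS: "(\<lambda>n. al n powr P) summable_on {1..}"
    using nat_summable_bound(1)[of "\<lambda>n. al n powr P" "(Q * Nrm) powr P"] bound1 unfolding S_def by auto
  then show "(\<lambda>n. (psum a n / real n) powr P) summable_on {1..}" unfolding al_def .
  define ST where "ST = infsum (\<lambda>n. al n powr P) {1..}"
  have SleST: "S N \<le> ST" for N unfolding S_def ST_def by (rule partial_le_infsum[OF sS]) auto
  have "\<exists>n0\<ge>2. al n0 \<noteq> al (n0 - 1)"
  proof (rule ccontr)
    assume "\<not> ?thesis"
    then have eq: "al n = al (n - 1)" if "n \<ge> 2" for n using that by auto
    have alc: "al n = al 1" if "n \<ge> 1" for n
      using that
    proof (induction n rule: dec_induct)
      case base then show ?case by simp
    next
      case (step m) then show ?case using eq[of "Suc m"] by simp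
    qed
    have ac: "a n = al 1" if "n \<ge> 1" for n
    proof (cases n)
      case 0 then show ?thesis using that by simp
    next
      case (Suc j)
      show ?thesis
      proof (cases j)
        case 0 then show ?thesis using Suc aeq[of 0] by (simp add: alz)
      next
        case (Suc i)
        then show ?thesis using \<open>n = Suc j\<close> aeq[of j] alc[of j] alc[of "Suc j"]
          by (simp add: algebra_simps)
      qed
    qed
    have "((\<lambda>n. a n powr P) summable_on {1..}) = ((\<lambda>n::nat. al 1 powr P) summable_on {1..})"
      by (intro summable_on_cong) (simp add: ac)
    then have "al 1 powr P = 0" using sa by (intro const_summable_zero) auto
    then have "\<And>n. n \<ge> 1 \<Longrightarrow> a n powr P = 0" using ac by simp
    then have "infsum (\<lambda>n. a n powr P) {1..} = 0" by (intro infsum_0) auto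
    then show False using Na by simp
  qed
  then obtain n0 where n0: "n0 \<ge> 2" "al n0 \<noteq> al (n0 - 1)" by blast
  define \<delta> where "\<delta> = dd n0"
  have dpos: "\<delta> > 0"
  proof -
    have "D (al n0) (al (n0 - 1)) > 0"
      using young_strict[OF P al0 al0 n0(2)] unfolding D_def by simp
    moreover have "real n0 - 1 > 0" using n0 by simp
    ultimately show ?thesis unfolding \<delta>_def dd_def using Q1 by simp
  qed
  have ddN: "(\<Sum>n=1..N. dd n) \<ge> \<delta>" if "N \<ge> n0" for N
    unfolding \<delta>_def by (rule member_le_sum) (use that n0 dd0 in auto)
  have Sn0: "S n0 > 0"
  proof (rule ccontr)
    assume "\<not> S n0 > 0"
    then have "S n0 = 0" using S0[of n0] by simp
    then show False using main[of n0] ddN[of n0] dpos by simp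
  qed
  have STp: "ST > 0" using Sn0 SleST[of n0] by simp
  define B1 where "B1 = Q * Nrm - \<delta> / ST powr (1/Q)"
  have bigN: "S N powr (1/P) \<le> B1" if "N \<ge> n0" for N
  proof -
    have SNp: "S N > 0" using Smono[OF that] Sn0 by simp
    have "S N powr (1/P) \<le> Q * Nrm - (\<Sum>n=1..N. dd n) / S N powr (1/Q)"
      using div_trick[OF P PQ SNp Nrm0[THEN less_imp_le] main] by simp
    also have "\<dots> \<le> Q * Nrm - \<delta> / ST powr (1/Q)"
    proof -
      have "\<delta> / ST powr (1/Q) \<le> \<delta> / S N powr (1/Q)"
        using dpos SNp SleST[of N] Q1 by (intro divide_left_mono powr_mono2) auto
      also have "\<dots> \<le> (\<Sum>n=1..N. dd n) / S N powr (1/Q)"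
        using ddN[OF that] SNp by (intro divide_right_mono) auto
      finally show ?thesis by simp
    qed
    finally show ?thesis unfolding B1_def .
  qed
  have B1pos: "B1 > 0"
  proof -
    have "S n0 powr (1/P) > 0" using Sn0 by simp
    then show ?thesis using bigN[of n0] by linarith
  qed
  have allN: "S N \<le> B1 powr P" for N
  proof (cases "N \<ge> n0")
    case True
    have "(S N powr (1/P)) powr P \<le> B1 powr P"
      using bigN[OF True] P by (intro powr_mono2) auto
    then show ?thesis using S0[of N] P by (simp add: powr_powr)
  next
    case False
    then have "S N \<le> S n0" by (intro Smono) simp
    also have "\<dots> \<le> B1 powr P"
    proof -
      have "(S n0 powr (1/P)) powr P \<le> B1 powr P"
        using bigN[of n0] P by (intro powr_mono2) auto
      then show ?thesis using S0[of n0] P by (simp add: powr_powr)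
    qed
    finally show ?thesis .
  qed
  have "ST \<le> B1 powr P"
    unfolding ST_def using nat_summable_bound(2)[of "\<lambda>n. al n powr P" "B1 powr P"] allN
    unfolding S_def by auto
  also have "\<dots> < (Q * Nrm) powr P"
  proof (rule powr_less_mono2)
    show "B1 < Q * Nrm" unfolding B1_def using dpos STp by simp
  qed (use P B1pos in auto)
  finally show "infsum (\<lambda>n. (psum a n / real n) powr P) {1..} < Q powr P * infsum (\<lambda>n. a n powr P) {1..}"
    unfolding ST_def al_def QN .
qed

lemma decr_sum_le_integral:
  fixes \<phi> :: "real \<Rightarrow> real"
  assumes dec: "\<And>x z. 0 < x \<Longrightarrow> x \<le> z \<Longrightarrow> \<phi> z \<le> \<phi> x"
    and nn: "\<And>x. x > 0 \<Longrightarrow> \<phi> x \<ge> 0"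
    and int: "\<phi> integrable_on {0<..}" and y: "y > 0"
  shows "(\<Sum>m=1..N. \<phi> (real m / y) / y) \<le> integral {0<..} \<phi>"
proof -
  define \<psi> where "\<psi> u = (if u \<in> {0<..} then \<phi> u else 0)" for u :: real
  have \<psi>int: "\<psi> integrable_on UNIV" unfolding \<psi>_def using int integrable_restrict_UNIV by blast
  have \<psi>0: "\<psi> u \<ge> 0" for u unfolding \<psi>_def using nn by auto
  have \<psi>sub: "\<psi> integrable_on {c..d}" for c d by (rule integrable_on_subinterval[OF \<psi>int]) auto
  have piece: "(d - c) * \<phi> d \<le> integral {c..d} \<psi>" if cd: "0 \<le> c" "c < d" for c d
  proof -
    have e1: "integral {c..d} (\<lambda>_. \<phi> d) = (d - c) * \<phi> d" using cd by simp
    have e2: "integral {c..d} (\<lambda>_. \<phi> d) = integral {c<..<d} (\<lambda>_. \<phi> d)"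
      by (rule integral_open_interval_real)
    have e3: "integral {c<..<d} (\<lambda>_. \<phi> d) \<le> integral {c<..<d} \<psi>"
    proof (rule integral_le)
      show "(\<lambda>_. \<phi> d) integrable_on {c<..<d}"
        using integrable_on_open_interval_real integrable_const_ivl by blast
      show "\<psi> integrable_on {c<..<d}" using integrable_on_open_interval_real \<psi>sub by blast
      show "\<phi> d \<le> \<psi> x" if "x \<in> {c<..<d}" for x
        using that cd dec[of x d] unfolding \<psi>_def by auto
    qed
    have e4: "integral {c<..<d} \<psi> = integral {c..d} \<psi>" by (rule integral_open_interval_real[symmetric])
    show ?thesis using e1 e2 e3 e4 cd by simp
  qed
  have comb: "integral {0..real N / y} \<psi> = (\<Sum>m=1..N. integral {(real m - 1)/y..real m/y} \<psi>)" for N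
  proof (induction N)
    case 0 then show ?case by simp
  next
    case (Suc N)
    have "integral {0..real N / y} \<psi> + integral {real N / y..real (Suc N) / y} \<psi> = integral {0..real (Suc N) / y} \<psi>"
      by (rule Henstock_Kurzweil_Integration.integral_combine) (use y \<psi>sub in \<open>auto simp: divide_right_mono\<close>)
    then show ?case using Suc by simp
  qed
  have "(\<Sum>m=1..N. \<phi> (real m / y) / y) \<le> (\<Sum>m=1..N. integral {(real m - 1)/y..real m/y} \<psi>)"
  proof (rule sum_mono)
    fix m assume "m \<in> {1..N}"
    then have "0 \<le> (real m - 1)/y" "(real m - 1)/y < real m / y" using y by (auto simp: divide_strict_right_mono)
    from piece[OF this] have "(real m / y - (real m - 1)/y) * \<phi> (real m / y) \<le> integral {(real m - 1)/y..real m/y} \<psi>" .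
    moreover have "real m / y - (real m - 1)/y = 1 / y" using y by (simp add: field_simps)
    ultimately show "\<phi> (real m / y) / y \<le> integral {(real m - 1)/y..real m/y} \<psi>" by simp
  qed
  also have "\<dots> = integral {0..real N / y} \<psi>" by (rule comb[symmetric])
  also have "\<dots> \<le> integral UNIV \<psi>"
    by (rule integral_subset_le) (use \<psi>sub \<psi>int \<psi>0 in auto)
  also have "\<dots> = integral {0<..} \<phi>" unfolding \<psi>_def by (rule Henstock_Kurzweil_Integration.integral_restrict_UNIV)
  finally show ?thesis .
qed

lemma decr_sum_ge_integral:
  fixes \<phi> :: "real \<Rightarrow> real"
  assumes dec: "\<And>x z. 0 < x \<Longrightarrow> x \<le> z \<Longrightarrow> \<phi> z \<le> \<phi> x"
    and int: "\<phi> integrable_on {0<..}" and y: "y > 0" and N0: "N0 \<ge> 1" and N1: "N1 \<ge> N0"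
  shows "integral {real N0 / y..real (N1 + 1) / y} \<phi> \<le> (\<Sum>m=N0..N1. \<phi> (real m / y) / y)"
  using N1
proof (induction N1 rule: dec_induct)
  have sub: "\<phi> integrable_on {c..d}" if "0 < c" for c d
    by (rule integrable_on_subinterval[OF int]) (use that in auto)
  have piece: "integral {c..d} \<phi> \<le> (d - c) * \<phi> c" if cd: "0 < c" "c \<le> d" for c d
  proof -
    have "integral {c..d} \<phi> \<le> integral {c..d} (\<lambda>_. \<phi> c)"
      by (rule integral_le) (use sub[OF cd(1)] dec cd in auto)
    also have "\<dots> = (d - c) * \<phi> c" using cd by simp
    finally show ?thesis .
  qed
  {
    case base
    have "integral {real N0 / y..real (N0 + 1) / y} \<phi> \<le> (real (N0 + 1) / y - real N0 / y) * \<phi> (real N0 / y)"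
      by (rule piece) (use y N0 in \<open>auto simp: divide_right_mono\<close>)
    also have "real (N0 + 1) / y - real N0 / y = 1 / y" using y by (simp add: field_simps)
    finally show ?case by simp
  next
    case (step n)
    have c0: "real N0 / y > 0" using y N0 by simp
    have "integral {real N0 / y..real (Suc n + 1) / y} \<phi>
        = integral {real N0 / y..real (n + 1) / y} \<phi> + integral {real (n + 1) / y..real (Suc n + 1) / y} \<phi>"
      using Henstock_Kurzweil_Integration.integral_combine[where a="real N0 / y" and c="real (n+1)/y" and b="real (Suc n + 1)/y" and f=\<phi>] y step(1) sub[OF c0]
      by (simp add: divide_right_mono)
    also have "integral {real (n + 1) / y..real (Suc n + 1) / y} \<phi> \<le> (real (Suc n + 1) / y - real (n + 1) / y) * \<phi> (real (n+1) / y)"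
      by (rule piece) (use y in \<open>auto simp: divide_right_mono\<close>)
    also have "real (Suc n + 1) / y - real (n + 1) / y = 1 / y" using y by (simp add: field_simps)
    finally show ?case using step(3) step(1) by simp
  }
qed

locale kern =
  fixes p q lam r s :: real and k :: "real \<Rightarrow> real \<Rightarrow> real"
  assumes hp: "p > 1" and hpq: "1/p + 1/q = 1"
    and hrs: "r + s = lam"
    and kpos: "\<And>x y. x > 0 \<Longrightarrow> y > 0 \<Longrightarrow> k x y > 0"
    and khom: "\<And>u x y. u > 0 \<Longrightarrow> x > 0 \<Longrightarrow> y > 0 \<Longrightarrow> k (u * x) (u * y) = u powr (- lam) * k x y"
    and kint_fin: "set_integrable lborel {0<..} (\<lambda>u. k u 1 * u powr (r - 1))"
    and kint_pos: "kint k r > 0"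
    and mono1: "decr_strict_somewhere (\<lambda>u. k u 1 * u powr (r - 1))"
    and mono2: "decr_strict_somewhere (\<lambda>u. k 1 u * u powr (s - 1))"
begin

definition G where "G u = k u 1 * u powr (r - 1)"
definition Hf where "Hf u = k 1 u * u powr (s - 1)"
abbreviation K where "K \<equiv> kint k r"

lemma q1: "q > 1" using conj_q[OF hp hpq] by simp
lemma Kpos: "K > 0" by (rule kint_pos)

lemma Gpos: "u > 0 \<Longrightarrow> G u > 0" unfolding G_def using kpos[of u 1] by simp
lemma Hpos: "u > 0 \<Longrightarrow> Hf u > 0" unfolding Hf_def using kpos[of 1 u] by simp

lemma Gdec: "0 < x \<Longrightarrow> x \<le> z \<Longrightarrow> G z \<le> G x"
  using mono1 unfolding decr_strict_somewhere_def G_def by blast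
lemma Hdec: "0 < x \<Longrightarrow> x \<le> z \<Longrightarrow> Hf z \<le> Hf x"
  using mono2 unfolding decr_strict_somewhere_def Hf_def by blast

lemma G_int: "G integrable_on {0<..}" "integral {0<..} G = K"
proof -
  have "(\<lambda>u. k u 1 * u powr (r - 1)) = G" by (simp add: G_def fun_eq_iff)
  then have si: "set_integrable lborel {0<..} G" using kint_fin by simp
  show "G integrable_on {0<..}" using set_borel_integral_eq_integral(1)[OF si] .
  show "integral {0<..} G = K"
    unfolding kint_def using set_borel_integral_eq_integral(2)[OF si] by (simp add: G_def[abs_def])
qed

lemma G_absint: "G absolutely_integrable_on {0<..}"
  using absolutely_integrable_on_iff_nonneg[of "{0<..}" G] G_int(1) Gpos by (auto intro: less_imp_le)

lemma k_scale1: "x > 0 \<Longrightarrow> y > 0 \<Longrightarrow> k x y = y powr (-lam) * k (x/y) 1"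
  using khom[of y "x/y" 1] by simp

lemma k_scale2: "x > 0 \<Longrightarrow> y > 0 \<Longrightarrow> k x y = x powr (-lam) * k 1 (y/x)"
  using khom[of x 1 "y/x"] by simp

lemma H_eq: "u > 0 \<Longrightarrow> Hf u = \<bar>- 1 / u\<^sup>2\<bar> * G (1/u)"
proof -
  assume u: "u > 0"
  have "k 1 u = u powr (-lam) * k (1/u) 1" using k_scale1[of 1 u] u by simp
  then have "Hf u = k (1/u) 1 * (u powr (-lam) * u powr (s - 1))" unfolding Hf_def by simp
  also have "u powr (-lam) * u powr (s - 1) = u powr (- r - 1)"
  proof -
    have "u powr (-lam) * u powr (s - 1) = u powr (-lam + (s - 1))" by (rule powr_add[symmetric])
    also have "-lam + (s - 1) = - r - 1" using hrs by simp
    finally show ?thesis .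
  qed
  also have "u powr (- r - 1) = (1/u) powr (r - 1) * (1 / u\<^sup>2)"
  proof -
    have "(1/u) powr (r - 1) = u powr (1 - r)" using u by (simp add: powr_divide powr_minus_divide[symmetric] powr_minus)
    moreover have "1 / u\<^sup>2 = u powr (-2)" using u by (simp add: powr_minus powr_realpow divide_inverse)
    moreover have "u powr (1 - r) * u powr (-2) = u powr ((1 - r) + (-2))" by (rule powr_add[symmetric])
    moreover have "(1 - r) + (-2) = - r - 1" by simp
    ultimately show ?thesis by metis
  qed
  finally show ?thesis using u unfolding G_def by simp
qed

lemma H_int: "Hf integrable_on {0<..}" "integral {0<..} Hf = K"
proof -
  have S: "({0<..} :: real set) \<in> sets lebesgue" by simp
  have der: "((\<lambda>x. 1/x) has_field_derivative (- 1 / x\<^sup>2)) (at x within {0<..})" if "x \<in> {0<..}" for x :: real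
    using that by (auto intro!: derivative_eq_intros simp: power2_eq_square)
  have inj: "inj_on (\<lambda>x::real. 1/x) {0<..}" by (auto simp: inj_on_def)
  have img: "(\<lambda>x::real. 1/x) ` {0<..} = {0<..}"
  proof
    show "(\<lambda>x::real. 1/x) ` {0<..} \<subseteq> {0<..}" by auto
    show "{0<..} \<subseteq> (\<lambda>x::real. 1/x) ` {0<..}"
    proof
      fix y :: real assume "y \<in> {0<..}"
      then show "y \<in> (\<lambda>x. 1/x) ` {0<..}" by (intro image_eqI[of _ _ "1/y"]) auto
    qed
  qed
  have "(\<lambda>x. \<bar>- 1 / x\<^sup>2\<bar> * G (1/x)) absolutely_integrable_on {0<..} \<and>
        integral {0<..} (\<lambda>x. \<bar>- 1 / x\<^sup>2\<bar> * G (1/x)) = K"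
    using has_absolute_integral_change_of_variables_1'[OF S der inj, of G K] img G_absint G_int(2)
    by simp
  then have A: "(\<lambda>x. \<bar>- 1 / x\<^sup>2\<bar> * G (1/x)) integrable_on {0<..}"
     "integral {0<..} (\<lambda>x. \<bar>- 1 / x\<^sup>2\<bar> * G (1/x)) = K"
    using set_lebesgue_integral_eq_integral(1) by auto
  show "Hf integrable_on {0<..}" using A(1) integrable_cong[of "{0<..}" Hf] H_eq by auto
  show "integral {0<..} Hf = K" using A(2) integral_cong[of "{0<..}" Hf] H_eq by auto
qed

lemma W1:
  assumes y: "y > 0"
  shows "(\<lambda>m. k (real m) y * real m powr (r - 1)) summable_on {1..}"
    "infsum (\<lambda>m. k (real m) y * real m powr (r - 1)) {1..} \<le> y powr (-s) * K"
proof -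
  have tm: "k (real m) y * real m powr (r - 1) = y powr (-s-1) * G (real m / y)" if "m \<ge> 1" for m
  proof -
    have m: "real m > 0" using that by simp
    have "real m powr (r - 1) = (y * (real m / y)) powr (r - 1)" using y by simp
    also have "\<dots> = y powr (r - 1) * (real m / y) powr (r - 1)" by (metis powr_mult less_imp_le y m)
    finally have e: "real m powr (r - 1) = y powr (r - 1) * (real m / y) powr (r - 1)" .
    have "k (real m) y * real m powr (r - 1) = (y powr (-lam) * y powr (r - 1)) * G (real m / y)"
      unfolding k_scale1[OF m y] e G_def by simp
    also have "y powr (-lam) * y powr (r - 1) = y powr (-s-1)"
    proof -
      have "y powr (-lam) * y powr (r - 1) = y powr (-lam + (r - 1))" by (rule powr_add[symmetric])
      also have "-lam + (r - 1) = - s - 1" using hrs by simp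
      finally show ?thesis .
    qed
    finally show ?thesis .
  qed
  have bd: "(\<Sum>m=1..N. k (real m) y * real m powr (r - 1)) \<le> y powr (-s) * K" for N
  proof -
    have "(\<Sum>m=1..N. k (real m) y * real m powr (r - 1)) = (\<Sum>m=1..N. y powr (-s-1) * G (real m / y))"
      by (rule sum.cong) (auto simp: tm)
    also have "\<dots> = y powr (-s) * (\<Sum>m=1..N. G (real m / y) / y)"
    proof -
      have "y powr (-s-1) = y powr (-s) / y" using y by (simp add: powr_diff)
      then show ?thesis by (simp add: sum_distrib_left sum_divide_distrib)
    qed
    also have "\<dots> \<le> y powr (-s) * K"
      using decr_sum_le_integral[OF Gdec _ G_int(1) y, of N] Gpos G_int(2)
      by (intro mult_left_mono) (auto intro: less_imp_le)
    finally show ?thesis .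
  qed
  have nn: "k (real m) y * real m powr (r - 1) \<ge> 0" if "m \<ge> 1" for m
    using kpos[of "real m" y] that y by simp
  show "(\<lambda>m. k (real m) y * real m powr (r - 1)) summable_on {1..}"
    by (rule nat_summable_bound(1)[OF nn bd])
  show "infsum (\<lambda>m. k (real m) y * real m powr (r - 1)) {1..} \<le> y powr (-s) * K"
    by (rule nat_summable_bound(2)[OF nn bd])
qed

lemma W2:
  assumes x: "x > 0"
  shows "(\<lambda>n. k x (real n) * real n powr (s - 1)) summable_on {1..}"
    "infsum (\<lambda>n. k x (real n) * real n powr (s - 1)) {1..} \<le> x powr (-r) * K"
proof -
  have tm: "k x (real n) * real n powr (s - 1) = x powr (-r-1) * Hf (real n / x)" if "n \<ge> 1" for n
  proof -
    have n: "real n > 0" using that by simp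
    have "real n powr (s - 1) = (x * (real n / x)) powr (s - 1)" using x by simp
    also have "\<dots> = x powr (s - 1) * (real n / x) powr (s - 1)" by (metis powr_mult less_imp_le x n)
    finally have e: "real n powr (s - 1) = x powr (s - 1) * (real n / x) powr (s - 1)" .
    have "k x (real n) * real n powr (s - 1) = (x powr (-lam) * x powr (s - 1)) * Hf (real n / x)"
      unfolding k_scale2[OF x n] e Hf_def by simp
    also have "x powr (-lam) * x powr (s - 1) = x powr (-r-1)"
    proof -
      have "x powr (-lam) * x powr (s - 1) = x powr (-lam + (s - 1))" by (rule powr_add[symmetric])
      also have "-lam + (s - 1) = - r - 1" using hrs by simp
      finally show ?thesis .
    qed
    finally show ?thesis .
  qed
  have bd: "(\<Sum>n=1..N. k x (real n) * real n powr (s - 1)) \<le> x powr (-r) * K" for N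
  proof -
    have "(\<Sum>n=1..N. k x (real n) * real n powr (s - 1)) = (\<Sum>n=1..N. x powr (-r-1) * Hf (real n / x))"
      by (rule sum.cong) (auto simp: tm)
    also have "\<dots> = x powr (-r) * (\<Sum>n=1..N. Hf (real n / x) / x)"
    proof -
      have "x powr (-r-1) = x powr (-r) / x" using x by (simp add: powr_diff)
      then show ?thesis by (simp add: sum_distrib_left sum_divide_distrib)
    qed
    also have "\<dots> \<le> x powr (-r) * K"
      using decr_sum_le_integral[OF Hdec _ H_int(1) x, of N] Hpos H_int(2)
      by (intro mult_left_mono) (auto intro: less_imp_le)
    finally show ?thesis .
  qed
  have nn: "k x (real n) * real n powr (s - 1) \<ge> 0" if "n \<ge> 1" for n
    using kpos[of x "real n"] that x by simp
  show "(\<lambda>n. k x (real n) * real n powr (s - 1)) summable_on {1..}"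
    by (rule nat_summable_bound(1)[OF nn bd])
  show "infsum (\<lambda>n. k x (real n) * real n powr (s - 1)) {1..} \<le> x powr (-r) * K"
    by (rule nat_summable_bound(2)[OF nn bd])
qed

end

lemma sigma_nonneg:
  fixes f :: "nat \<Rightarrow> nat \<Rightarrow> real"
  assumes nn: "\<And>x y. x \<in> A \<Longrightarrow> y \<in> B \<Longrightarrow> f x y \<ge> 0"
    and inner: "\<And>x. x \<in> A \<Longrightarrow> f x summable_on B"
    and outer: "(\<lambda>x. infsum (f x) B) summable_on A"
  shows "(\<lambda>(x,y). f x y) summable_on A \<times> B"
    and "infsum (\<lambda>(x,y). f x y) (A \<times> B) = infsum (\<lambda>x. infsum (f x) B) A"
    and "(\<lambda>(y,x). f x y) summable_on B \<times> A"
    and "\<And>y. y \<in> B \<Longrightarrow> (\<lambda>x. f x y) summable_on A"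
    and "(\<lambda>y. infsum (\<lambda>x. f x y) A) summable_on B"
    and "infsum (\<lambda>y. infsum (\<lambda>x. f x y) A) B = infsum (\<lambda>x. infsum (f x) B) A"
    and "infsum (\<lambda>(y,x). f x y) (B \<times> A) = infsum (\<lambda>x. infsum (f x) B) A"
proof -
  have S: "(\<lambda>z. f (fst z) (snd z)) summable_on Sigma A (\<lambda>_. B)"
    by (rule summable_on_SigmaI[where g="\<lambda>x. infsum (f x) B"]) (use nn inner outer in auto)
  show S1: "(\<lambda>(x,y). f x y) summable_on A \<times> B" using S by (simp add: case_prod_beta')
  show "infsum (\<lambda>(x,y). f x y) (A \<times> B) = infsum (\<lambda>x. infsum (f x) B) A"
    using infsum_Sigma'_banach[OF S1] by simp
  have S2: "(\<lambda>z. (\<lambda>(x,y). f x y) (snd z, fst z)) summable_on B \<times> A"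
    using S1 summable_on_swap[of "\<lambda>(x,y). f x y" A B] by (simp add: case_prod_beta')
  show S3: "(\<lambda>(y,x). f x y) summable_on B \<times> A" using S2 by (simp add: case_prod_beta')
  show "\<And>y. y \<in> B \<Longrightarrow> (\<lambda>x. f x y) summable_on A"
    using summable_on_SigmaD1[of "\<lambda>y x. f x y" B "\<lambda>_. A"] S3 by auto
  show "(\<lambda>y. infsum (\<lambda>x. f x y) A) summable_on B"
    using summable_on_Sigma_banach[of "\<lambda>y x. f x y" B "\<lambda>_. A"] S3 by auto
  show "infsum (\<lambda>y. infsum (\<lambda>x. f x y) A) B = infsum (\<lambda>x. infsum (f x) B) A"
    using infsum_swap_banach[of f A B] S1 by simp
  have "((\<lambda>(x,y). f x y) has_sum infsum (\<lambda>(x,y). f x y) (A \<times> B)) (A \<times> B)" using S1 by simp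
  then have "((\<lambda>z. (\<lambda>(x,y). f x y) (snd z, fst z)) has_sum infsum (\<lambda>(x,y). f x y) (A \<times> B)) (B \<times> A)"
    using has_sum_swap[of "\<lambda>(x,y). f x y"] by (simp add: case_prod_beta')
  then have "infsum (\<lambda>(y,x). f x y) (B \<times> A) = infsum (\<lambda>(x,y). f x y) (A \<times> B)"
    by (simp add: case_prod_beta' infsumI)
  also have "\<dots> = infsum (\<lambda>x. infsum (f x) B) A"
    using infsum_Sigma'_banach[OF S1] by simp
  finally show "infsum (\<lambda>(y,x). f x y) (B \<times> A) = infsum (\<lambda>x. infsum (f x) B) A" .
qed

lemma T2_factor:
  fixes m y kv al p q r s :: real
  assumes m: "m > 0" and y: "y > 0" and kv: "kv > 0" and al: "al \<ge> 0" and p: "p > 1" and pq: "1/p + 1/q = 1"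
  shows "m powr (r - 1/q - 1) * y powr (s - 1/p) * kv * (m * al)
       = (kv * m powr (r-1)) powr (1/q) * (y powr (p * s - 1) * kv * m powr r * al powr p) powr (1/p)"
proof (cases "al = 0")
  case True then show ?thesis using p by simp
next
  case False
  then have alp: "al > 0" using al by simp
  have iq: "1/q = 1 - 1/p" using pq by simp
  have p0: "p \<noteq> 0" using p by simp
  let ?L = "m powr (r - 1/q - 1) * y powr (s - 1/p) * kv * (m * al)"
  let ?R = "(kv * m powr (r-1)) powr (1/q) * (y powr (p * s - 1) * kv * m powr r * al powr p) powr (1/p)"
  have Lp: "?L > 0" using m y kv alp by simp
  have Rp: "?R > 0" using m y kv alp by simp
  have lnL: "ln ?L = (r - 1/q - 1) * ln m + (s - 1/p) * ln y + ln kv + ln m + ln al"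
    using m y kv alp by (simp add: ln_mult)
  have lnR: "ln ?R = (1/q) * (ln kv + (r - 1) * ln m) + (1/p) * ((p * s - 1) * ln y + ln kv + r * ln m + p * ln al)"
    using m y kv alp by (simp add: ln_mult)
  have ar: "(r - 1/q - 1)*A + (s - 1/p)*B + C + A + D = (1/q)*(C + (r-1)*A) + (1/p)*((p * s - 1)*B + C + r*A + p*D)" for A B C D
    using p0 unfolding iq by (simp add: field_simps)
  have "ln ?L = ln ?R" unfolding lnL lnR by (rule ar)
  then show ?thesis using Lp Rp by simp
qed

context kern begin

definition al where "al a m = psum a m / real m"
definition uu where "uu a n m = real n powr (s-1) * k (real m) (real n) * real m powr r * al a m powr p"
definition T2 where "T2 a n m = real m powr (r - 1/q - 1) * real n powr (s - 1/p) * k (real m) (real n) * psum a m"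
definition J where "J a n = infsum (T2 a n) {1..}"

lemma hqp: "1/q + 1/p = 1" using hpq by simp

lemma adm_nonneg: "admissible P a \<Longrightarrow> n \<ge> 1 \<Longrightarrow> a n \<ge> 0"
  unfolding admissible_def by auto

lemma al_nonneg: "admissible P a \<Longrightarrow> al a m \<ge> 0"
  unfolding al_def using psum_nonneg[of a m] adm_nonneg[of P a] by simp

lemma psum_al: "m \<ge> 1 \<Longrightarrow> psum a m = real m * al a m"
  unfolding al_def by simp

lemma hardy_al:
  assumes "admissible p a"
  shows "(\<lambda>m. al a m powr p) summable_on {1..}"
    "infsum (\<lambda>m. al a m powr p) {1..} < q powr p * infsum (\<lambda>n. a n powr p) {1..}"
  using hardy_strict[OF hp hpq assms] unfolding al_def by auto

lemma uu_nonneg: "admissible p a \<Longrightarrow> n \<ge> 1 \<Longrightarrow> m \<ge> 1 \<Longrightarrow> uu a n m \<ge> 0"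
  unfolding uu_def using kpos[of "real m" "real n"] al_nonneg[of p a m] by simp

lemma uu_facts:
  assumes adm: "admissible p a"
  shows "\<And>n. n \<ge> 1 \<Longrightarrow> (\<lambda>m. uu a n m) summable_on {1..}"
    "(\<lambda>n. infsum (\<lambda>m. uu a n m) {1..}) summable_on {1..}"
    "infsum (\<lambda>n. infsum (\<lambda>m. uu a n m) {1..}) {1..} \<le> K * infsum (\<lambda>m. al a m powr p) {1..}"
proof -
  define f where "f m n = uu a n m" for m n
  have nn: "f x y \<ge> 0" if "x \<in> {1..}" "y \<in> {1..}" for x y
    unfolding f_def using uu_nonneg[OF adm] that by auto
  have fe: "f m = (\<lambda>n. (real m powr r * al a m powr p) * (k (real m) (real n) * real n powr (s - 1)))" for m
    unfolding f_def uu_def by (auto simp: fun_eq_iff)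
  have inner: "f m summable_on {1..}" if "m \<in> {1..}" for m
    unfolding fe using W2(1)[of "real m"] that by (intro summable_on_cmult_right) auto
  have innerb: "infsum (f m) {1..} \<le> K * al a m powr p" if "m \<in> {1..}" for m
  proof -
    have mp: "real m > 0" using that by simp
    have "infsum (f m) {1..} = (real m powr r * al a m powr p) * infsum (\<lambda>n. k (real m) (real n) * real n powr (s - 1)) {1..}"
      unfolding fe by (rule infsum_cmult_right') 
    also have "\<dots> \<le> (real m powr r * al a m powr p) * (real m powr (-r) * K)"
      using W2(2)[OF mp] by (intro mult_left_mono) auto
    also have "\<dots> = (real m powr r * real m powr (-r)) * K * al a m powr p" by simp
    also have "real m powr r * real m powr (-r) = 1" using mp by (simp add: powr_add[symmetric])
    finally show ?thesis by simp
  qed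
  have outer: "(\<lambda>m. infsum (f m) {1..}) summable_on {1..}"
  proof (rule summable_on_comparison_test)
    show "(\<lambda>m. K * al a m powr p) summable_on {1..}"
      using hardy_al(1)[OF adm] by (rule summable_on_cmult_right)
    show "infsum (f m) {1..} \<le> K * al a m powr p" if "m \<in> {1..}" for m using innerb that .
    show "0 \<le> infsum (f m) {1..}" if "m \<in> {1..}" for m using nn that by (intro infsum_nonneg) auto
  qed
  note SG = sigma_nonneg[of "{1..}" "{1..}" f, OF nn inner outer]
  show "\<And>n. n \<ge> 1 \<Longrightarrow> (\<lambda>m. uu a n m) summable_on {1..}" using SG(4) unfolding f_def by auto
  show "(\<lambda>n. infsum (\<lambda>m. uu a n m) {1..}) summable_on {1..}" using SG(5) unfolding f_def by auto
  have "infsum (\<lambda>n. infsum (\<lambda>m. uu a n m) {1..}) {1..} = infsum (\<lambda>m. infsum (f m) {1..}) {1..}"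
    using SG(6) unfolding f_def by simp
  also have "\<dots> \<le> infsum (\<lambda>m. K * al a m powr p) {1..}"
    by (rule infsum_mono[OF outer]) (use innerb hardy_al(1)[OF adm] in \<open>auto intro: summable_on_cmult_right\<close>)
  also have "\<dots> = K * infsum (\<lambda>m. al a m powr p) {1..}" by (rule infsum_cmult_right')
  finally show "infsum (\<lambda>n. infsum (\<lambda>m. uu a n m) {1..}) {1..} \<le> K * infsum (\<lambda>m. al a m powr p) {1..}" .
qed

lemma T2_nonneg: "admissible p a \<Longrightarrow> n \<ge> 1 \<Longrightarrow> m \<ge> 1 \<Longrightarrow> T2 a n m \<ge> 0"
  unfolding T2_def using kpos[of "real m" "real n"] psum_nonneg[of a m] adm_nonneg[of p a] by simp

lemma J_bound:
  assumes adm: "admissible p a" and n: "n \<ge> 1"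
  shows "T2 a n summable_on {1..}" "J a n \<ge> 0"
    "J a n powr p \<le> K powr (p - 1) * infsum (\<lambda>m. uu a n m) {1..}"
proof -
  define y where "y = real n"
  have y: "y > 0" using n unfolding y_def by simp
  define X where "X m = (k (real m) y * real m powr (r-1)) powr (1/q)" for m
  define Y where "Y m = (y powr (p * s - 1) * k (real m) y * real m powr r * al a m powr p) powr (1/p)" for m
  have X0: "X m \<ge> 0" for m unfolding X_def by simp
  have Y0: "Y m \<ge> 0" for m unfolding Y_def by simp
  have TXY: "T2 a n m = Y m * X m" if "m \<ge> 1" for m
  proof -
    have mp: "real m > 0" using that by simp
    have "T2 a n m = real m powr (r - 1/q - 1) * y powr (s - 1/p) * k (real m) y * (real m * al a m)"
      unfolding T2_def y_def psum_al[OF that] by simp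
    also have "\<dots> = X m * Y m" unfolding X_def Y_def
      by (rule T2_factor[OF mp y kpos[OF mp y] al_nonneg[OF adm] hp hpq])
    finally show ?thesis by simp
  qed
  have Xq: "X m powr q = k (real m) y * real m powr (r-1)" if "m \<ge> 1" for m
    unfolding X_def using q1 kpos[of "real m" y] y that by (simp add: powr_powr)
  have Yp: "Y m powr p = y powr (p * s - s) * uu a n m" if "m \<ge> 1" for m
  proof -
    have "Y m powr p = y powr (p * s - 1) * k (real m) y * real m powr r * al a m powr p"
      unfolding Y_def using hp kpos[of "real m" y] y that al_nonneg[OF adm, of m] by (simp add: powr_powr)
    also have "y powr (p * s - 1) = y powr (p * s - s) * y powr (s - 1)"
    proof -
      have "y powr (p * s - s) * y powr (s - 1) = y powr ((p * s - s) + (s - 1))" by (rule powr_add[symmetric])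
      also have "(p * s - s) + (s - 1) = p * s - 1" by simp
      finally show ?thesis by simp
    qed
    finally show ?thesis unfolding uu_def y_def by (simp add: mult_ac)
  qed
  have sX: "(\<lambda>m. X m powr q) summable_on {1..}"
    using W1(1)[OF y] by (rule summable_on_cong[THEN iffD1, rotated]) (simp add: Xq)
  have sU: "(\<lambda>m. uu a n m) summable_on {1..}" using uu_facts(1)[OF adm n] .
  have sY: "(\<lambda>m. Y m powr p) summable_on {1..}"
  proof -
    have "(\<lambda>m. y powr (p * s - s) * uu a n m) summable_on {1..}" using sU by (rule summable_on_cmult_right)
    then show ?thesis by (rule summable_on_cong[THEN iffD1, rotated]) (simp add: Yp)
  qed
  note H = holder_infsum[OF hp hpq, of "{1..}" Y X, OF Y0 X0 sY sX]
  show sT: "T2 a n summable_on {1..}"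
    using H(1) by (rule summable_on_cong[THEN iffD1, rotated]) (simp add: TXY)
  have JE: "J a n = infsum (\<lambda>m. Y m * X m) {1..}" unfolding J_def by (rule infsum_cong) (simp add: TXY)
  show J0: "J a n \<ge> 0" unfolding J_def using T2_nonneg[OF adm n] by (intro infsum_nonneg) auto
  define A where "A = infsum (\<lambda>m. Y m powr p) {1..}"
  define B where "B = infsum (\<lambda>m. X m powr q) {1..}"
  define U where "U = infsum (\<lambda>m. uu a n m) {1..}"
  have A0: "A \<ge> 0" unfolding A_def by (intro infsum_nonneg) simp
  have B0: "B \<ge> 0" unfolding B_def by (intro infsum_nonneg) simp
  have AU: "A = y powr (p * s - s) * U"
  proof -
    have "A = infsum (\<lambda>m. y powr (p * s - s) * uu a n m) {1..}" unfolding A_def by (rule infsum_cong) (simp add: Yp)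
    also have "\<dots> = y powr (p * s - s) * U" unfolding U_def by (rule infsum_cmult_right')
    finally show ?thesis .
  qed
  have BK: "B \<le> y powr (-s) * K"
  proof -
    have "B = infsum (\<lambda>m. k (real m) y * real m powr (r - 1)) {1..}" unfolding B_def by (rule infsum_cong) (simp add: Xq)
    then show ?thesis using W1(2)[OF y] by simp
  qed
  have JAB: "J a n \<le> A powr (1/p) * B powr (1/q)" unfolding JE A_def B_def using H(2) .
  have "J a n powr p \<le> (A powr (1/p) * B powr (1/q)) powr p"
    using JAB J0 hp by (intro powr_mono2) auto
  also have "\<dots> = A * B powr (p - 1)"
  proof -
    have "(A powr (1/p) * B powr (1/q)) powr p = (A powr (1/p)) powr p * (B powr (1/q)) powr p"
      using A0 B0 by (simp add: powr_mult)
    also have "\<dots> = A * B powr (p/q)" using A0 B0 hp by (simp add: powr_powr)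
    also have "p / q = p - 1" using conj_q[OF hp hpq] by simp
    finally show ?thesis .
  qed
  also have "\<dots> \<le> A * (y powr (-s) * K) powr (p - 1)"
    using BK B0 A0 hp by (intro mult_left_mono powr_mono2) auto
  also have "\<dots> = K powr (p - 1) * U"
  proof -
    have "(y powr (-s) * K) powr (p - 1) = y powr (-s * (p - 1)) * K powr (p - 1)"
      using y Kpos by (simp add: powr_mult powr_powr)
    moreover have "y powr (p * s - s) * y powr (-s * (p - 1)) = 1"
    proof -
      have "y powr (p * s - s) * y powr (-s * (p - 1)) = y powr ((p * s - s) + (-s * (p - 1)))" by (rule powr_add[symmetric])
      also have "(p * s - s) + (-s * (p - 1)) = 0" by (simp add: algebra_simps)
      finally show ?thesis using y by simp
    qed
    ultimately show ?thesis unfolding AU by (metis (no_types, lifting) mult.assoc mult.commute mult.left_commute mult_1)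
  qed
  finally show "J a n powr p \<le> K powr (p - 1) * infsum (\<lambda>m. uu a n m) {1..}" unfolding U_def .
qed

lemma J_main:
  assumes adm: "admissible p a"
  shows "(\<lambda>n. J a n powr p) summable_on {1..}"
    "infsum (\<lambda>n. J a n powr p) {1..} \<le> K powr p * infsum (\<lambda>m. al a m powr p) {1..}"
proof -
  have sU: "(\<lambda>n. K powr (p - 1) * infsum (\<lambda>m. uu a n m) {1..}) summable_on {1..}"
    using uu_facts(2)[OF adm] by (rule summable_on_cmult_right)
  show sJ: "(\<lambda>n. J a n powr p) summable_on {1..}"
    by (rule summable_on_comparison_test[OF sU]) (use J_bound[OF adm] in auto)
  have "infsum (\<lambda>n. J a n powr p) {1..} \<le> infsum (\<lambda>n. K powr (p - 1) * infsum (\<lambda>m. uu a n m) {1..}) {1..}"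
    by (rule infsum_mono[OF sJ sU]) (use J_bound(3)[OF adm] in auto)
  also have "\<dots> = K powr (p - 1) * infsum (\<lambda>n. infsum (\<lambda>m. uu a n m) {1..}) {1..}"
    by (rule infsum_cmult_right')
  also have "\<dots> \<le> K powr (p - 1) * (K * infsum (\<lambda>m. al a m powr p) {1..})"
    using uu_facts(3)[OF adm] by (intro mult_left_mono) auto
  also have "\<dots> = K powr p * infsum (\<lambda>m. al a m powr p) {1..}"
  proof -
    have "K powr (p - 1) * K = K powr p" using Kpos powr_Pm1_mult[of K p] by simp
    then show ?thesis by (simp add: mult.assoc[symmetric])
  qed
  finally show "infsum (\<lambda>n. J a n powr p) {1..} \<le> K powr p * infsum (\<lambda>m. al a m powr p) {1..}" .
qed

lemma part2:
  assumes adm: "admissible p a"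
  shows "ineq2 k p q r s ((q * K) powr p) a"
proof -
  have Nap: "infsum (\<lambda>n. a n powr p) {1..} > 0" using adm unfolding admissible_def by simp
  have "infsum (\<lambda>n. J a n powr p) {1..} \<le> K powr p * infsum (\<lambda>m. al a m powr p) {1..}" by (rule J_main(2)[OF adm])
  also have "\<dots> < K powr p * (q powr p * infsum (\<lambda>n. a n powr p) {1..})"
    using hardy_al(2)[OF adm] Kpos by (intro mult_strict_left_mono) auto
  also have "\<dots> = (q * K) powr p * infsum (\<lambda>n. a n powr p) {1..}"
    using Kpos q1 by (simp add: powr_mult)
  finally have lt: "infsum (\<lambda>n. J a n powr p) {1..} < (q * K) powr p * infsum (\<lambda>n. a n powr p) {1..}" .
  have tT: "(\<lambda>n m. real m powr (r - 1/q - 1) * real n powr (s - 1/p) * k (real m) (real n) * psum a m) = T2 a"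
    by (simp add: T2_def[abs_def])
  show ?thesis unfolding ineq2_def Let_def tT J_def[symmetric]
    using J_bound(1)[OF adm] J_main(1)[OF adm] lt by (auto simp: J_def)
qed

definition t1 where "t1 a b m n = real m powr (r - 1/q - 1) * real n powr (s - 1/p - 1) * k (real m) (real n) * psum a m * psum b n"

lemma t1_eq: "n \<ge> 1 \<Longrightarrow> t1 a b m n = T2 a n m * al b n"
proof -
  assume n: "n \<ge> 1"
  have "real n powr (s - 1/p - 1) = real n powr (s - 1/p) / real n"
    using n by (simp add: powr_diff)
  then show ?thesis unfolding t1_def T2_def al_def by simp
qed

lemma hardy_b:
  assumes "admissible q b"
  shows "(\<lambda>n. al b n powr q) summable_on {1..}"
    "infsum (\<lambda>n. al b n powr q) {1..} < p powr q * infsum (\<lambda>n. b n powr q) {1..}"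
  using hardy_strict[OF q1 hqp assms] unfolding al_def by auto

lemma ineq1_core:
  assumes adma: "admissible p a" and admb: "admissible q b"
  shows "(\<lambda>(m,n). t1 a b m n) summable_on {1..} \<times> {1..}"
    "infsum (\<lambda>(m,n). t1 a b m n) ({1..} \<times> {1..}) = infsum (\<lambda>n. J a n * al b n) {1..}"
    "infsum (\<lambda>n. J a n * al b n) {1..}
       \<le> (infsum (\<lambda>n. J a n powr p) {1..}) powr (1/p) * (infsum (\<lambda>n. al b n powr q) {1..}) powr (1/q)"
    "\<And>n. n \<ge> 1 \<Longrightarrow> infsum (T2 a n) {1..} * al b n = J a n * al b n"
    "(\<lambda>n. J a n * al b n) summable_on {1..}"
proof -
  define f where "f n m = T2 a n m * al b n" for n m
  have nn: "f x y \<ge> 0" if "x \<in> {1..}" "y \<in> {1..}" for x y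
    unfolding f_def using T2_nonneg[OF adma] al_nonneg[OF admb] that by auto
  have inner: "f n summable_on {1..}" if "n \<in> {1..}" for n
    unfolding f_def using J_bound(1)[OF adma] that by (intro summable_on_cmult_left) auto
  have ie: "infsum (f n) {1..} = J a n * al b n" for n
    unfolding f_def J_def by (rule infsum_cmult_left')
  note H = holder_infsum[OF hp hpq, of "{1..}" "J a" "al b", OF _ _ J_main(1)[OF adma] hardy_b(1)[OF admb]]
  have outer: "(\<lambda>n. infsum (f n) {1..}) summable_on {1..}"
    unfolding ie using H(1) J_bound(2)[OF adma] al_nonneg[OF admb] by auto
  note SG = sigma_nonneg[of "{1..}" "{1..}" f, OF nn inner outer]
  have te: "(\<lambda>(m,n). t1 a b m n) x = (\<lambda>(m,n). f n m) x" if "x \<in> {1..} \<times> {1..}" for x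
    using that t1_eq by (auto simp: f_def)
  show "(\<lambda>(m,n). t1 a b m n) summable_on {1..} \<times> {1..}"
    using SG(3) by (rule summable_on_cong[THEN iffD1, rotated]) (use te in auto)
  have "infsum (\<lambda>(m,n). t1 a b m n) ({1..} \<times> {1..}) = infsum (\<lambda>(m,n). f n m) ({1..} \<times> {1..})"
    by (rule infsum_cong) (use te in auto)
  also have "\<dots> = infsum (\<lambda>n. J a n * al b n) {1..}" using SG(7) unfolding ie .
  finally show "infsum (\<lambda>(m,n). t1 a b m n) ({1..} \<times> {1..}) = infsum (\<lambda>n. J a n * al b n) {1..}" .
  show "infsum (\<lambda>n. J a n * al b n) {1..}
       \<le> (infsum (\<lambda>n. J a n powr p) {1..}) powr (1/p) * (infsum (\<lambda>n. al b n powr q) {1..}) powr (1/q)"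
    using H(2) J_bound(2)[OF adma] al_nonneg[OF admb] by auto
  show "\<And>n. n \<ge> 1 \<Longrightarrow> infsum (T2 a n) {1..} * al b n = J a n * al b n" by (simp add: J_def)
  show "(\<lambda>n. J a n * al b n) summable_on {1..}" using H(1) J_bound(2)[OF adma] al_nonneg[OF admb] by auto
qed

lemma t1_lam: "(\<lambda>(m,n). real m powr (r - 1/q - 1) * real n powr (s - 1/p - 1) * k (real m) (real n) * psum a m * psum b n)
   = (\<lambda>(m,n). t1 a b m n)"
  by (simp add: t1_def)

lemma ineq1_from_J:
  assumes adma: "admissible p a" and admb: "admissible q b" and C: "C > 0"
    and JC: "infsum (\<lambda>n. J a n powr p) {1..} < C * infsum (\<lambda>n. a n powr p) {1..}"
  shows "ineq1 k p q r s (p * C powr (1/p)) a b"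
proof -
  have Na: "infsum (\<lambda>n. a n powr p) {1..} > 0" using adma unfolding admissible_def by simp
  have Nb: "infsum (\<lambda>n. b n powr q) {1..} > 0" using admb unfolding admissible_def by simp
  have J0: "infsum (\<lambda>n. J a n powr p) {1..} \<ge> 0" by (intro infsum_nonneg) simp
  have B0: "infsum (\<lambda>n. al b n powr q) {1..} \<ge> 0" by (intro infsum_nonneg) simp
  have x1: "(infsum (\<lambda>n. J a n powr p) {1..}) powr (1/p) < (C * infsum (\<lambda>n. a n powr p) {1..}) powr (1/p)"
    using JC J0 hp by (intro powr_less_mono2) auto
  have x2: "(infsum (\<lambda>n. al b n powr q) {1..}) powr (1/q) < (p powr q * infsum (\<lambda>n. b n powr q) {1..}) powr (1/q)"
    using hardy_b(2)[OF admb] B0 q1 by (intro powr_less_mono2) auto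
  have "infsum (\<lambda>(m,n). t1 a b m n) ({1..} \<times> {1..})
     \<le> (infsum (\<lambda>n. J a n powr p) {1..}) powr (1/p) * (infsum (\<lambda>n. al b n powr q) {1..}) powr (1/q)"
    using ineq1_core(2,3)[OF adma admb] by simp
  also have "\<dots> < (C * infsum (\<lambda>n. a n powr p) {1..}) powr (1/p) * (p powr q * infsum (\<lambda>n. b n powr q) {1..}) powr (1/q)"
    using x1 x2 by (intro mult_strict_mono) (auto simp: C Na)
  also have "\<dots> = p * C powr (1/p) * (infsum (\<lambda>n. a n powr p) {1..}) powr (1/p) * (infsum (\<lambda>n. b n powr q) {1..}) powr (1/q)"
    using C Na Nb hp q1 by (simp add: powr_mult powr_powr)
  finally show ?thesis unfolding ineq1_def Let_def t1_lam using ineq1_core(1)[OF adma admb] by simp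
qed

lemma part1:
  assumes adma: "admissible p a" and admb: "admissible q b"
  shows "ineq1 k p q r s (p * q * K) a b"
proof -
  have "ineq2 k p q r s ((q * K) powr p) a" by (rule part2[OF adma])
  then have JC: "infsum (\<lambda>n. J a n powr p) {1..} < (q * K) powr p * infsum (\<lambda>n. a n powr p) {1..}"
    unfolding ineq2_def Let_def J_def T2_def by simp
  have "ineq1 k p q r s (p * ((q * K) powr p) powr (1/p)) a b"
    by (rule ineq1_from_J[OF adma admb _ JC]) (use q1 Kpos in simp)
  moreover have "p * ((q * K) powr p) powr (1/p) = p * q * K" using q1 Kpos hp by (simp add: powr_powr)
  ultimately show ?thesis by simp
qed

end

lemma mvt_pow:
  fixes x c :: real
  assumes x: "x > 0" and c: "c < 1"
  shows "\<exists>\<xi>. (x+1) powr c - x powr c = c * \<xi> powr (c-1) \<and> (x+1) powr (c-1) \<le> \<xi> powr (c-1) \<and> \<xi> powr (c-1) \<le> x powr (c-1)"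
proof -
  have "\<exists>z. x < z \<and> z < x + 1 \<and> ((x+1) powr c - x powr c = (x + 1 - x) * (c * z powr (c - 1)))"
    by (rule MVT2) (use x in \<open>auto intro!: has_real_derivative_powr\<close>)
  then obtain z where z: "x < z" "z < x + 1" "(x+1) powr c - x powr c = (x + 1 - x) * (c * z powr (c - 1))" by blast
  have "(x+1) powr (c-1) \<le> z powr (c-1)" using z x c by (intro powr_mono2') auto
  moreover have "z powr (c-1) \<le> x powr (c-1)" using z x c by (intro powr_mono2') auto
  ultimately show ?thesis using z(3) by auto
qed

lemma pow_inc_upper:
  fixes x c :: real assumes x: "x > 0" and c: "0 < c" "c < 1"
  shows "(x+1) powr c - x powr c \<le> c * x powr (c - 1)"
  using mvt_pow[OF x c(2)] c by (auto intro: mult_left_mono order.trans[rotated])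

lemma negpow_diff:
  fixes x e :: real assumes x: "x > 0" and e: "e > 0"
  shows "e * (x+1) powr (-e-1) \<le> x powr (-e) - (x+1) powr (-e)"
    "x powr (-e) - (x+1) powr (-e) \<le> e * x powr (-e-1)"
proof -
  obtain \<xi> where xi: "(x+1) powr (-e) - x powr (-e) = (-e) * \<xi> powr (-e-1)"
    "(x+1) powr (-e-1) \<le> \<xi> powr (-e-1)" "\<xi> powr (-e-1) \<le> x powr (-e-1)"
    using mvt_pow[OF x, of "-e"] e by auto
  have d: "x powr (-e) - (x+1) powr (-e) = e * \<xi> powr (-e-1)" using xi(1) by simp
  show "e * (x+1) powr (-e-1) \<le> x powr (-e) - (x+1) powr (-e)"
    unfolding d using xi(2) e by (intro mult_left_mono) auto
  show "x powr (-e) - (x+1) powr (-e) \<le> e * x powr (-e-1)"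
    unfolding d using xi(3) e by (intro mult_left_mono) auto
qed

lemma zeta_partial_upper:
  fixes e :: real assumes e: "e > 0"
  shows "(\<Sum>n=1..L. real n powr (-e-1)) \<le> 1 + 1/e"
proof -
  have ind: "(\<Sum>n=1..L. real n powr (-e-1)) \<le> 1 + (1 - real L powr (-e))/e" if "L \<ge> 1" for L
    using that
  proof (induction L rule: dec_induct)
    case base then show ?case by simp
  next
    case (step L)
    have Lp: "real L > 0" using step(1) by simp
    have "(\<Sum>n=1..Suc L. real n powr (-e-1)) = (\<Sum>n=1..L. real n powr (-e-1)) + real (Suc L) powr (-e-1)"
      by simp
    also have "\<dots> \<le> 1 + (1 - real L powr (-e))/e + (real L powr (-e) - real (Suc L) powr (-e))/e"
    proof -
      have "e * (real L + 1) powr (-e-1) \<le> real L powr (-e) - (real L + 1) powr (-e)"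
        by (rule negpow_diff(1)[OF Lp e])
      then have "real (Suc L) powr (-e-1) \<le> (real L powr (-e) - real (Suc L) powr (-e))/e"
        using e by (simp add: field_simps add.commute)
      then show ?thesis using step(3) by linarith
    qed
    also have "\<dots> = 1 + (1 - real (Suc L) powr (-e))/e" using e by (simp add: field_simps)
    finally show ?case .
  qed
  show ?thesis
  proof (cases "L \<ge> 1")
    case True
    have "(1 - real L powr (-e))/e \<le> 1/e" using e by (intro divide_right_mono) auto
    then show ?thesis using ind[OF True] by linarith
  next
    case False then show ?thesis using e by simp
  qed
qed

lemma zeta_partial_lower:
  fixes e :: real assumes e: "e > 0" and L0: "L0 \<ge> 1" and L: "L \<ge> L0"
  shows "(\<Sum>n=L0..L. real n powr (-e-1)) \<ge> (real L0 powr (-e) - real (L+1) powr (-e))/e"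
  using L
proof (induction L rule: dec_induct)
  case base
  have Lp: "real L0 > 0" using L0 by simp
  have "real L0 powr (-e) - (real L0 + 1) powr (-e) \<le> e * real L0 powr (-e-1)" by (rule negpow_diff(2)[OF Lp e])
  then show ?case using e by (simp add: field_simps add.commute)
next
  case (step L)
  have Lp: "real (L+1) > 0" by simp
  have "real (L+1) powr (-e) - (real (L+1) + 1) powr (-e) \<le> e * real (L+1) powr (-e-1)" by (rule negpow_diff(2)[OF Lp e])
  then have "(real (L+1) powr (-e) - real (Suc L + 1) powr (-e))/e \<le> real (Suc L) powr (-e-1)"
    using e by (simp add: field_simps add.commute)
  moreover have "(\<Sum>n=L0..Suc L. real n powr (-e-1)) = (\<Sum>n=L0..L. real n powr (-e-1)) + real (Suc L) powr (-e-1)"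
    using step(1) L0 by simp
  ultimately show ?case using step(3) e by (simp add: diff_divide_distrib)
qed

lemma zeta:
  fixes e :: real assumes e: "e > 0"
  shows "(\<lambda>n. real n powr (-e-1)) summable_on {1..}"
    "infsum (\<lambda>n. real n powr (-e-1)) {1..} \<le> 1 + 1/e"
    "infsum (\<lambda>n. real n powr (-e-1)) {1..} \<ge> 1"
proof -
  show sm: "(\<lambda>n. real n powr (-e-1)) summable_on {1..}"
    by (rule nat_summable_bound(1)[OF _ zeta_partial_upper[OF e]]) simp
  show "infsum (\<lambda>n. real n powr (-e-1)) {1..} \<le> 1 + 1/e"
    by (rule nat_summable_bound(2)[OF _ zeta_partial_upper[OF e]]) simp
  have "(\<Sum>n=1..1. real n powr (-e-1)) \<le> infsum (\<lambda>n. real n powr (-e-1)) {1..}"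
    by (rule partial_le_infsum[OF sm]) simp
  then show "infsum (\<lambda>n. real n powr (-e-1)) {1..} \<ge> 1" by simp
qed

lemma telescope: "(\<Sum>k=1..m. f (Suc k) - f k) = f (Suc m) - (f 1 :: real)"
  by (induction m) auto

lemma psum_lower:
  fixes P Q e \<theta> :: real
  assumes P: "P > 1" and PQ: "1/P + 1/Q = 1" and e: "e > 0" "e \<le> P / (2*Q)"
    and N: "N \<ge> 1" and th: "0 \<le> \<theta>" "\<theta> \<le> 1 - real N powr (-1/(2*Q))" and m: "m \<ge> N"
  shows "psum (\<lambda>n. real n powr (-(1+e)/P)) m \<ge> Q * \<theta> * real m powr (1 - (1+e)/P)"
proof -
  have Q: "Q > 1" using conj_q[OF P PQ] by simp
  define c where "c = 1 - (1+e)/P"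
  have c_eq: "c = 1/Q - e/P"
  proof -
    have "(1+e)/P = 1/P + e/P" by (simp add: add_divide_distrib)
    then show ?thesis unfolding c_def using PQ by linarith
  qed
  have c1: "c \<ge> 1/(2*Q)"
  proof -
    have "e/P \<le> 1/(2*Q)" using e P Q by (simp add: field_simps)
    then show ?thesis unfolding c_eq by simp
  qed
  have c2: "c \<le> 1/Q" unfolding c_eq using e P by simp
  have cpos: "c > 0" using c1 Q by (smt (verit) divide_pos_pos)
  have clt: "c < 1" using c2 Q by (smt (verit) divide_less_eq_1_pos)
  have mp: "real m \<ge> 1" using m N by simp
  have step: "real k powr (-(1+e)/P) \<ge> ((real k + 1) powr c - real k powr c)/c" if "k \<ge> 1" for k
  proof -
    have "(real k + 1) powr c - real k powr c \<le> c * real k powr (c - 1)"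
      by (rule pow_inc_upper) (use that cpos clt in auto)
    moreover have "c - 1 = -(1+e)/P" unfolding c_def using P by (simp add: field_simps)
    ultimately show ?thesis using cpos by (simp add: field_simps)
  qed
  have "psum (\<lambda>n. real n powr (-(1+e)/P)) m \<ge> (\<Sum>k=1..m. ((real k + 1) powr c - real k powr c)/c)"
    unfolding psum_def by (rule sum_mono) (use step in auto)
  also have "(\<Sum>k=1..m. ((real k + 1) powr c - real k powr c)/c) = ((real m + 1) powr c - 1)/c"
  proof -
    have "(\<Sum>k=1..m. ((real k + 1) powr c - real k powr c)/c) = (\<Sum>k=1..m. (real k + 1) powr c - real k powr c)/c"
      by (simp add: sum_divide_distrib)
    also have "(\<Sum>k=1..m. (real k + 1) powr c - real k powr c) = (real m + 1) powr c - 1"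
      using telescope[of "\<lambda>k. real k powr c" m] by (simp add: add.commute)
    finally show ?thesis .
  qed
  also have "((real m + 1) powr c - 1)/c \<ge> (real m powr c - 1)/c"
    using cpos mp by (intro divide_right_mono diff_right_mono powr_mono2) auto
  finally have A: "psum (\<lambda>n. real n powr (-(1+e)/P)) m \<ge> (real m powr c - 1)/c" .
  have Nc: "real N powr (-c) \<le> real N powr (-1/(2*Q))"
    using c1 N by (intro powr_mono) auto
  have B: "real m powr c * \<theta> \<le> real m powr c - 1"
  proof -
    have "1 = real N powr c * real N powr (-c)" using N by (simp add: powr_add[symmetric])
    also have "\<dots> \<le> real m powr c * real N powr (-c)"
      using m N cpos by (intro mult_right_mono powr_mono2) auto
    also have "\<dots> \<le> real m powr c * real N powr (-1/(2*Q))" using Nc by (intro mult_left_mono) auto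
    finally have "1 \<le> real m powr c * real N powr (-1/(2*Q))" .
    moreover have "real m powr c * \<theta> \<le> real m powr c * (1 - real N powr (-1/(2*Q)))"
      using th by (intro mult_left_mono) auto
    ultimately show ?thesis by (simp add: algebra_simps)
  qed
  have "Q * \<theta> * real m powr c \<le> (real m powr c * \<theta>) / c"
  proof -
    have "Q \<le> 1/c" using c2 cpos Q by (simp add: field_simps)
    then have "Q * (real m powr c * \<theta>) \<le> (1/c) * (real m powr c * \<theta>)"
      using th by (intro mult_right_mono) auto
    then show ?thesis by (simp add: mult_ac)
  qed
  also have "\<dots> \<le> (real m powr c - 1)/c" using B cpos by (intro divide_right_mono) auto
  finally show ?thesis using A unfolding c_def by simp
qed

context kern begin

lemma kG: assumes "m > 0" "y > 0" shows "k m y * m powr (r - 1) = y powr (-s-1) * G (m / y)"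
proof -
  have "m powr (r - 1) = (y * (m / y)) powr (r - 1)" using assms by simp
  also have "\<dots> = y powr (r - 1) * (m / y) powr (r - 1)" by (metis powr_mult less_imp_le assms divide_nonneg_pos)
  finally have e: "m powr (r - 1) = y powr (r - 1) * (m / y) powr (r - 1)" .
  have "k m y * m powr (r - 1) = (y powr (-lam) * y powr (r - 1)) * G (m / y)"
    unfolding k_scale1[OF assms] e G_def by simp
  also have "y powr (-lam) * y powr (r - 1) = y powr (-s-1)"
  proof -
    have "y powr (-lam) * y powr (r - 1) = y powr (-lam + (r - 1))" by (rule powr_add[symmetric])
    also have "-lam + (r - 1) = - s - 1" using hrs by simp
    finally show ?thesis .
  qed
  finally show ?thesis .
qed

lemma GM_approx:
  assumes th: "\<theta> < 1"
  shows "\<exists>M::nat. M \<ge> 2 \<and> integral {1 / real M..real M} G \<ge> \<theta> * K"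
proof -
  define f where "f j u = (if u \<in> {1/(real j+1)..real j+1} then G u else 0)" for j :: nat and u :: real
  have sub: "{1/(real j+1)..real j+1} \<inter> {0<..} = {1/(real j+1)..real j+1}" for j :: nat
    by (auto intro: less_le_trans[of 0 "1/(real j + 1)"])
  have fint: "f j integrable_on {0<..}" for j
  proof -
    have "G integrable_on {1/(real j+1)..real j+1}"
      by (rule integrable_on_subinterval[OF G_int(1)]) (auto intro: less_le_trans[of 0 "1/(real j + 1)"])
    then show ?thesis unfolding f_def using integrable_restrict_Int[of "{1/(real j+1)..real j+1}" G "{0<..}"] sub
      by simp
  qed
  have fval: "integral {0<..} (f j) = integral {1/(real j+1)..real j+1} G" for j
    unfolding f_def using integral_restrict_Int[of "{0<..}" "{1/(real j+1)..real j+1}" G] sub by simp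
  have conv: "(\<lambda>j. f j u) \<longlonglongrightarrow> G u" if u: "u \<in> {0<..}" for u
  proof (rule tendsto_eventually)
    have up: "u > 0" using u by simp
    obtain j0 :: nat where j0: "real j0 \<ge> max u (1/u)" using real_arch_simple by blast
    show "\<forall>\<^sub>F j in sequentially. f j u = G u"
    proof (rule eventually_sequentiallyI[of j0])
      fix j assume "j0 \<le> j"
      then have j: "real j + 1 \<ge> u" "real j + 1 \<ge> 1/u" using j0 by auto
      have "1/(real j + 1) \<le> u" using j(2) up by (simp add: field_simps)
      then show "f j u = G u" unfolding f_def using j(1) by auto
    qed
  qed
  have "(\<lambda>j. integral {0<..} (f j)) \<longlonglongrightarrow> integral {0<..} G"
    by (rule dominated_convergence(2)[OF fint G_int(1) _ conv])
       (auto simp: f_def abs_of_nonneg Gpos less_imp_le)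
  then have lim: "(\<lambda>j. integral {1/(real j+1)..real j+1} G) \<longlonglongrightarrow> K" unfolding fval G_int(2) .
  have "\<theta> * K < K" using th Kpos by simp
  from order_tendstoD(1)[OF lim this] obtain j0 where j0: "\<And>j. j \<ge> j0 \<Longrightarrow> \<theta> * K < integral {1/(real j+1)..real j+1} G"
    unfolding eventually_sequentially by blast
  define M where "M = Suc (Suc j0)"
  have "real M = real (Suc j0) + 1" unfolding M_def by simp
  then have "integral {1 / real M..real M} G > \<theta> * K" using j0[of "Suc j0"] by simp
  moreover have "M \<ge> 2" unfolding M_def by simp
  ultimately show ?thesis by (intro exI[of _ M]) auto
qed

lemma powr_comb: "(x::real) > 0 \<Longrightarrow> a + b = c \<Longrightarrow> x powr a * x powr b = x powr c"
  by (simp add: powr_add[symmetric])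

lemma inner_lower:
  fixes e \<theta> :: real and N M n :: nat
  assumes e: "e > 0" "e \<le> p/(2*q)" "e \<le> q/(2*p)"
    and th: "0 \<le> \<theta>" "\<theta> \<le> 1 - real N powr (-1/(2*q))" "\<theta> \<le> 1 - real N powr (-1/(2*p))"
    and N: "N \<ge> 1" and M: "M \<ge> 2" and GM: "integral {1/real M..real M} G \<ge> \<theta> * K"
    and n: "n \<ge> N * M"
  shows "(\<Sum>m=N..n*M-1. t1 (\<lambda>n. real n powr (-(1+e)/p)) (\<lambda>n. real n powr (-(1+e)/q)) m n)
       \<ge> p*q*\<theta>^3*K*real M powr (-e/p) * real n powr (-e-1)"
proof -
  define a where "a = (\<lambda>n. real n powr (-(1+e)/p))"
  define b where "b = (\<lambda>n. real n powr (-(1+e)/q))"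
  define y where "y = real n"
  have NM: "N * M \<ge> 2"
  proof -
    have "1 * 2 \<le> N * M" by (rule mult_le_mono[OF N M])
    then show ?thesis by simp
  qed
  have nN: "n \<ge> N"
  proof -
    have "N * 1 \<le> N * M" using M by (intro mult_le_mono2) simp
    then have "N \<le> N * M" by simp
    then show ?thesis using n by (rule le_trans)
  qed
  have y: "y > 0" unfolding y_def using n NM by simp
  have Mp: "real M > 0" using M by simp
  have iq: "1/q = 1 - 1/p" using hpq by simp
  define c0 where "c0 = p*q*\<theta>^2*real M powr (-e/p) * y powr (-2-e)"
  have c00: "c0 \<ge> 0" unfolding c0_def using th hp q1 by simp
  have Bn: "psum b n \<ge> p * \<theta> * y powr (1 - (1+e)/q)"
    unfolding b_def y_def by (rule psum_lower[OF q1 hqp e(1) e(3) N th(1) th(3) nN])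
  have pt: "t1 a b m n \<ge> c0 * G (real m / y)" if m: "m \<ge> N" "m \<le> n*M - 1" for m
  proof -
    have mp: "real m > 0" using m N by simp
    have Am: "psum a m \<ge> q * \<theta> * real m powr (1 - (1+e)/p)"
      unfolding a_def by (rule psum_lower[OF hp hpq e(1) e(2) N th(1) th(2) m(1)])
    have kp: "k (real m) y > 0" using kpos mp y by simp
    define W where "W = real m powr (r - 1/q - 1) * y powr (s - 1/p - 1) * k (real m) y"
    have W0: "W \<ge> 0" unfolding W_def using kp by simp
    have Am0: "psum a m \<ge> 0"
      using Am th(1) q1 by (smt (verit) mult_nonneg_nonneg powr_ge_zero)
    have Bn0: "psum b n \<ge> 0"
      using Bn th(1) hp by (smt (verit) mult_nonneg_nonneg powr_ge_zero)
    have "t1 a b m n = W * psum a m * psum b n" unfolding t1_def W_def y_def by simp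
    also have "\<dots> \<ge> W * (q * \<theta> * real m powr (1 - (1+e)/p)) * (p * \<theta> * y powr (1 - (1+e)/q))"
      using Am Bn W0 th q1 hp Am0 Bn0 by (intro mult_mono) auto
    finally have t1a: "t1 a b m n \<ge> W * (q * \<theta> * real m powr (1 - (1+e)/p)) * (p * \<theta> * y powr (1 - (1+e)/q))" .
    have em: "real m powr (r - 1/q - 1) * real m powr (1 - (1+e)/p) = real m powr (r - 1) * real m powr (-e/p)"
    proof -
      have "real m powr (r - 1/q - 1) * real m powr (1 - (1+e)/p) = real m powr ((r - 1) + (-e/p))"
        by (rule powr_comb[OF mp]) (simp add: iq add_divide_distrib)
      also have "\<dots> = real m powr (r - 1) * real m powr (-e/p)" by (rule powr_add)
      finally show ?thesis .
    qed
    have ey: "y powr (s - 1/p - 1) * y powr (1 - (1+e)/q) = y powr (s - 1 - e/q)"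
      by (rule powr_comb[OF y]) (simp add: iq add_divide_distrib diff_divide_distrib)
    have "W * (q * \<theta> * real m powr (1 - (1+e)/p)) * (p * \<theta> * y powr (1 - (1+e)/q))
        = p*q*\<theta>^2 * (k (real m) y * (real m powr (r - 1/q - 1) * real m powr (1 - (1+e)/p)))
            * (y powr (s - 1/p - 1) * y powr (1 - (1+e)/q))"
      unfolding W_def by (simp add: power2_eq_square mult_ac)
    also have "\<dots> = p*q*\<theta>^2 * (k (real m) y * real m powr (r - 1)) * real m powr (-e/p) * y powr (s - 1 - e/q)"
      unfolding em ey by (simp add: mult_ac)
    also have "\<dots> = p*q*\<theta>^2 * (y powr (-s-1) * G (real m / y)) * real m powr (-e/p) * y powr (s - 1 - e/q)"
      unfolding kG[OF mp y] ..
    finally have eqX: "W * (q * \<theta> * real m powr (1 - (1+e)/p)) * (p * \<theta> * y powr (1 - (1+e)/q))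
      = p*q*\<theta>^2 * (y powr (-s-1) * G (real m / y)) * real m powr (-e/p) * y powr (s - 1 - e/q)" .
    have t1b: "t1 a b m n \<ge> p*q*\<theta>^2 * (y powr (-s-1) * G (real m / y)) * real m powr (-e/p) * y powr (s - 1 - e/q)"
      using t1a eqX by metis
    have mM: "real m \<le> y * real M"
    proof -
      have "m \<le> n * M" using m by simp
      then have "real m \<le> real (n * M)" by linarith
      then show ?thesis unfolding y_def by simp
    qed
    have mpow: "real m powr (-e/p) \<ge> (y * real M) powr (-e/p)"
      using mp mM e hp by (intro powr_mono2') (auto simp: divide_nonneg_pos)
    have yM: "(y * real M) powr (-e/p) = y powr (-e/p) * real M powr (-e/p)"
      using y Mp by (simp add: powr_mult)
    have Gp: "G (real m / y) \<ge> 0" using Gpos mp y by (simp add: less_imp_le)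
    have "p*q*\<theta>^2 * (y powr (-s-1) * G (real m / y)) * real m powr (-e/p) * y powr (s - 1 - e/q)
        \<ge> p*q*\<theta>^2 * (y powr (-s-1) * G (real m / y)) * (y powr (-e/p) * real M powr (-e/p)) * y powr (s - 1 - e/q)"
      using mpow Gp th hp q1 unfolding yM by (intro mult_right_mono mult_left_mono) auto
    also have "p*q*\<theta>^2 * (y powr (-s-1) * G (real m / y)) * (y powr (-e/p) * real M powr (-e/p)) * y powr (s - 1 - e/q)
        = p*q*\<theta>^2 * real M powr (-e/p) * (y powr (-s-1) * y powr (-e/p) * y powr (s - 1 - e/q)) * G (real m / y)"
      by (simp add: mult_ac)
    also have "y powr (-s-1) * y powr (-e/p) * y powr (s - 1 - e/q) = y powr (-2-e)"
    proof -
      have "y powr (-s-1) * y powr (-e/p) = y powr ((-s-1) + (-e/p))" by (rule powr_add[symmetric])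
      also have "\<dots> * y powr (s - 1 - e/q) = y powr (-2-e)"
      proof (rule powr_comb[OF y])
        have "e/p + e/q = e" using hpq by (metis distrib_left mult_1_right times_divide_eq_right)
        then show "(-s-1) + (-e/p) + (s - 1 - e/q) = -2-e" by linarith
      qed
      finally show ?thesis .
    qed
    finally show ?thesis using t1b unfolding c0_def by (simp add: mult_ac)
  qed
  have N1: "n * M - 1 \<ge> N"
  proof -
    have h1: "N * M * M \<le> n * M" using n by (rule mult_right_mono) simp
    have h2: "2 * 2 \<le> M * M" using mult_le_mono[OF M M] .
    have h3: "N * (2 * 2) \<le> N * (M * M)" using h2 by (rule mult_le_mono2)
    have h4: "N * (M * M) = N * M * M" by (rule mult.assoc[symmetric])
    have "N * (2 * 2) \<le> n * M" using h1 h3 unfolding h4 by (rule le_trans[rotated])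
    then show ?thesis using N by linarith
  qed
  have S1: "(\<Sum>m=N..n*M-1. t1 a b m n) \<ge> (\<Sum>m=N..n*M-1. c0 * G (real m / y))"
    by (rule sum_mono) (use pt in auto)
  have S2: "(\<Sum>m=N..n*M-1. c0 * G (real m / y)) = c0 * y * (\<Sum>m=N..n*M-1. G (real m / y) / y)"
    using y by (simp add: sum_distrib_left sum_divide_distrib)
  have S3: "(\<Sum>m=N..n*M-1. G (real m / y) / y) \<ge> integral {real N / y..real (n*M-1+1) / y} G"
    by (rule decr_sum_ge_integral[OF Gdec G_int(1) y N N1])
  have S4: "integral {real N / y..real (n*M-1+1) / y} G \<ge> integral {1/real M..real M} G"
  proof (rule integral_subset_le)
    have nM1: "n * M - 1 + 1 = n * M" using N1 N by simp
    have e1: "real (n*M-1+1) / y = real M" unfolding nM1 y_def using y y_def by simp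
    have e2: "real N / y \<le> 1 / real M"
    proof -
      have "real N * real M \<le> y" unfolding y_def using n by (metis of_nat_le_iff of_nat_mult)
      then show ?thesis using y Mp by (simp add: field_simps)
    qed
    have e3: "real N / y > 0" using N y by simp
    show "{1/real M..real M} \<subseteq> {real N / y..real (n*M-1+1) / y}" using e1 e2 by auto
    show "G integrable_on {1/real M..real M}"
      by (rule integrable_on_subinterval[OF G_int(1)]) (use Mp in \<open>auto intro: less_le_trans[of 0 "1/real M"]\<close>)
    show "G integrable_on {real N / y..real (n*M-1+1) / y}"
      by (rule integrable_on_subinterval[OF G_int(1)]) (use e3 in auto)
    show "\<forall>x\<in>{real N / y..real (n*M-1+1) / y}. 0 \<le> G x" using e3 Gpos by (auto intro: less_imp_le)
  qed
  have cy: "c0 * y \<ge> 0" using c00 y by simp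
  have S5: "c0 * y * (\<Sum>m=N..n*M-1. G (real m / y) / y) \<ge> c0 * y * (\<theta> * K)"
    using S3 S4 GM by (intro mult_left_mono[OF _ cy]) linarith
  have "(\<Sum>m=N..n*M-1. t1 a b m n) \<ge> c0 * y * (\<theta> * K)"
    using S1 S2 S5 by linarith
  moreover have "c0 * y * (\<theta> * K) = p*q*\<theta>^3*K*real M powr (-e/p) * y powr (-e-1)"
  proof -
    have "y powr (-2-e) * y = y powr (-e-1)"
      using powr_comb[OF y, of "-2-e" 1 "-e-1"] y by simp
    then show ?thesis unfolding c0_def by (simp add: power3_eq_cube power2_eq_square mult_ac)
  qed
  ultimately show ?thesis unfolding a_def b_def y_def by simp
qed

lemma part3:
  assumes C: "0 < C" "C < p * q * K"
  shows "\<exists>a b. admissible p a \<and> admissible q b \<and> \<not> ineq1 k p q r s C a b"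
proof -
  have pqK: "p * q * K > 0" using hp q1 Kpos by simp
  define \<rho> where "\<rho> = C / (p * q * K)"
  have \<rho>: "0 < \<rho>" "\<rho> < 1" unfolding \<rho>_def using C pqK by (auto simp: field_simps)
  define x0 where "x0 = (1 + \<rho>) / 2"
  have x0: "0 < x0" "x0 < 1" "\<rho> < x0" unfolding x0_def using \<rho> by auto
  define \<theta> where "\<theta> = x0 powr (1/5)"
  have th0: "\<theta> > 0" unfolding \<theta>_def using x0 by simp
  have th5: "\<theta> ^ 5 = x0"
  proof -
    have "\<theta> ^ 5 = \<theta> powr (real 5)" using th0 by (simp add: powr_realpow)
    also have "\<dots> = x0" unfolding \<theta>_def using x0 by (simp add: powr_powr)
    finally show ?thesis .
  qed
  have th1: "\<theta> < 1"
  proof (rule ccontr)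
    assume "\<not> \<theta> < 1"
    then have "1 \<le> \<theta> ^ 5" by simp
    then show False using th5 x0 by simp
  qed
  have Cth: "C < \<theta> ^ 5 * (p * q * K)"
  proof -
    have "C = \<rho> * (p * q * K)" unfolding \<rho>_def using hp q1 Kpos by simp
    also have "\<dots> < \<theta> ^ 5 * (p * q * K)" unfolding th5 using x0 pqK by (intro mult_strict_right_mono) auto
    finally show ?thesis .
  qed
  obtain M :: nat where M: "M \<ge> 2" "integral {1 / real M..real M} G \<ge> \<theta> * K"
    using GM_approx[OF th1] by blast
  have Mp: "real M > 0" using M by simp
  have lim1: "(\<lambda>N. real N powr (-1/(2*q))) \<longlonglongrightarrow> 0"
    using q1 by (intro tendsto_neg_powr filterlim_real_sequentially) (auto simp: divide_neg_pos)
  have lim2: "(\<lambda>N. real N powr (-1/(2*p))) \<longlonglongrightarrow> 0"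
    using hp by (intro tendsto_neg_powr filterlim_real_sequentially) (auto simp: divide_neg_pos)
  have "eventually (\<lambda>N. real N powr (-1/(2*q)) < 1 - \<theta>) sequentially"
    by (rule order_tendstoD(2)[OF lim1]) (use th1 in simp)
  moreover have "eventually (\<lambda>N. real N powr (-1/(2*p)) < 1 - \<theta>) sequentially"
    by (rule order_tendstoD(2)[OF lim2]) (use th1 in simp)
  moreover have "eventually (\<lambda>N. N \<ge> (1::nat)) sequentially" by (rule eventually_ge_at_top)
  ultimately have "eventually (\<lambda>N. real N powr (-1/(2*q)) < 1 - \<theta> \<and> real N powr (-1/(2*p)) < 1 - \<theta> \<and> N \<ge> 1) sequentially"
    by eventually_elim auto
  then obtain N :: nat where N: "real N powr (-1/(2*q)) < 1 - \<theta>" "real N powr (-1/(2*p)) < 1 - \<theta>" "N \<ge> 1"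
    unfolding eventually_sequentially by blast
  have thN1: "\<theta> \<le> 1 - real N powr (-1/(2*q))" and thN2: "\<theta> \<le> 1 - real N powr (-1/(2*p))" using N by auto
  define \<phi> where "\<phi> e = real M powr (-e/p) * real (N*M) powr (-e)" for e :: real
  have NMp: "real (N*M) > 0" using N M by simp
  have "(\<phi> \<longlongrightarrow> real M powr (-0/p) * real (N*M) powr (-0)) (at_right 0)"
    unfolding \<phi>_def using Mp NMp hp N(3) by (intro tendsto_intros) auto
  then have lphi: "(\<phi> \<longlongrightarrow> 1) (at_right 0)" using Mp NMp N(3) by simp
  have ev1: "eventually (\<lambda>e. \<theta> < \<phi> e) (at_right 0)" by (rule order_tendstoD(1)[OF lphi]) (use th1 in simp)
  have l1: "((\<lambda>e::real. 1 + e) \<longlongrightarrow> 1 + 0) (at_right 0)" by (intro tendsto_intros)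
  have ev2: "eventually (\<lambda>e::real. 1 + e < 1/\<theta>) (at_right 0)"
    by (rule order_tendstoD(2)[OF l1[simplified]]) (use th0 th1 in \<open>simp add: field_simps\<close>)
  have l2: "((\<lambda>e::real. e) \<longlongrightarrow> 0) (at_right 0)" by (rule tendsto_ident_at)
  have ev3: "eventually (\<lambda>e::real. e < p/(2*q)) (at_right 0)"
    by (rule order_tendstoD(2)[OF l2]) (use hp q1 in simp)
  have ev4: "eventually (\<lambda>e::real. e < q/(2*p)) (at_right 0)"
    by (rule order_tendstoD(2)[OF l2]) (use hp q1 in simp)
  have "eventually (\<lambda>e. \<theta> < \<phi> e \<and> 1 + e < 1/\<theta> \<and> e < p/(2*q) \<and> e < q/(2*p)) (at_right 0)"
    using ev1 ev2 ev3 ev4 by eventually_elim auto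
  then obtain bb :: real where bb: "bb > 0" "\<And>y. y > 0 \<Longrightarrow> y < bb \<Longrightarrow> \<theta> < \<phi> y \<and> 1 + y < 1/\<theta> \<and> y < p/(2*q) \<and> y < q/(2*p)"
    unfolding eventually_at_right_field by auto
  define e where "e = bb / 2"
  have e: "e > 0" "\<theta> < \<phi> e" "1 + e < 1/\<theta>" "e \<le> p/(2*q)" "e \<le> q/(2*p)"
    using bb(1) bb(2)[of e] unfolding e_def by auto
  define a where "a = (\<lambda>n. real n powr (-(1+e)/p))"
  define b where "b = (\<lambda>n. real n powr (-(1+e)/q))"
  define Z where "Z = infsum (\<lambda>n. real n powr (-e-1)) {1..}"
  have ap: "a n powr p = real n powr (-e-1)" for n
  proof -
    have "a n powr p = real n powr (-(1+e)/p * p)" unfolding a_def by (simp add: powr_powr)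
    also have "-(1+e)/p * p = -e-1" using hp by simp
    finally show ?thesis .
  qed
  have bq: "b n powr q = real n powr (-e-1)" for n
  proof -
    have "b n powr q = real n powr (-(1+e)/q * q)" unfolding b_def by (simp add: powr_powr)
    also have "-(1+e)/q * q = -e-1" using q1 by simp
    finally show ?thesis .
  qed
  note zt = zeta[OF e(1)]
  have Zp: "Z \<ge> 1" unfolding Z_def using zt(3) .
  have adma: "admissible p a" unfolding admissible_def ap using zt Z_def by (auto simp: a_def)
  have admb: "admissible q b" unfolding admissible_def bq using zt Z_def by (auto simp: b_def)
  have RHS: "C * (infsum (\<lambda>n. a n powr p) {1..}) powr (1/p) * (infsum (\<lambda>n. b n powr q) {1..}) powr (1/q) = C * Z"
  proof -
    have "Z powr (1/p) * Z powr (1/q) = Z" using Zp hpq by (simp add: powr_add[symmetric])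
    then show ?thesis unfolding ap bq Z_def[symmetric] by (simp add: mult.assoc)
  qed
  define L0 where "L0 = N * M"
  have L01: "L0 \<ge> 1"
  proof -
    have "1 * 1 \<le> N * M" by (rule mult_le_mono[OF N(3)]) (use M in simp)
    then show ?thesis unfolding L0_def by simp
  qed
  define cc where "cc = p*q*\<theta>^3*K*real M powr (-e/p)"
  have cc0: "cc \<ge> 0" unfolding cc_def using hp q1 th0 Kpos by simp
  note core = ineq1_core[OF adma admb]
  have termlow: "J a n * al b n \<ge> cc * real n powr (-e-1)" if n: "n \<ge> L0" for n
  proof -
    have n1: "n \<ge> 1" using n L01 by simp
    have te: "t1 a b m n = T2 a n m * al b n" for m using t1_eq[OF n1] .
    have smt1: "(\<lambda>m. t1 a b m n) summable_on {1..}"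
      unfolding te using J_bound(1)[OF adma n1] by (rule summable_on_cmult_left)
    have eqJ: "infsum (\<lambda>m. t1 a b m n) {1..} = J a n * al b n"
      unfolding te J_def by (rule infsum_cmult_left')
    have "(\<Sum>m=N..n*M-1. t1 a b m n) \<le> infsum (\<lambda>m. t1 a b m n) {1..}"
      by (rule finite_sum_le_infsum[OF smt1]) 
         (use N T2_nonneg[OF adma n1] al_nonneg[OF admb] in \<open>auto simp: te\<close>)
    moreover have "(\<Sum>m=N..n*M-1. t1 a b m n) \<ge> cc * real n powr (-e-1)"
      unfolding a_def b_def cc_def
      by (rule inner_lower[OF e(1) e(4) e(5) less_imp_le[OF th0] thN1 thN2 N(3) M(1) M(2)]) (use n L0_def in simp)
    ultimately show ?thesis using eqJ by simp
  qed
  define LHS where "LHS = infsum (\<lambda>n. J a n * al b n) {1..}"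
  have partial: "LHS \<ge> cc * ((real L0 powr (-e) - real (Suc L) powr (-e))/e)" if L: "L \<ge> L0" for L
  proof -
    have "cc * ((real L0 powr (-e) - real (L+1) powr (-e))/e) \<le> cc * (\<Sum>n=L0..L. real n powr (-e-1))"
      using zeta_partial_lower[OF e(1) L01 L] cc0 by (intro mult_left_mono) auto
    also have "\<dots> = (\<Sum>n=L0..L. cc * real n powr (-e-1))" by (simp add: sum_distrib_left)
    also have "\<dots> \<le> (\<Sum>n=L0..L. J a n * al b n)" by (rule sum_mono) (use termlow in auto)
    also have "\<dots> \<le> LHS" unfolding LHS_def
      by (rule finite_sum_le_infsum[OF core(5)]) 
         (use L01 J_bound(2)[OF adma] al_nonneg[OF admb] in auto)
    finally show ?thesis by simp
  qed
  have limL: "(\<lambda>L. cc * ((real L0 powr (-e) - real (Suc L) powr (-e))/e)) \<longlonglongrightarrow> cc * ((real L0 powr (-e) - 0)/e)"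
  proof -
    have "(\<lambda>L. real L powr (-e)) \<longlonglongrightarrow> 0"
      using e(1) by (intro tendsto_neg_powr filterlim_real_sequentially) auto
    then have "(\<lambda>L. real (Suc L) powr (-e)) \<longlonglongrightarrow> 0" by (rule LIMSEQ_Suc)
    then show ?thesis using e(1) by (intro tendsto_intros) auto
  qed
  have LHSge: "LHS \<ge> cc * ((real L0 powr (-e) - 0)/e)"
    by (rule tendsto_upperbound[OF limL]) (use partial in \<open>auto simp: eventually_sequentially\<close>)
  have "cc * ((real L0 powr (-e) - 0)/e) = p*q*\<theta>^3*K * \<phi> e / e"
    unfolding cc_def \<phi>_def L0_def by (simp add: mult_ac)
  also have "\<dots> \<ge> p*q*\<theta>^3*K * \<theta> / e"
    using e th0 hp q1 Kpos by (intro divide_right_mono mult_left_mono) auto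
  finally have Y: "cc * ((real L0 powr (-e) - 0)/e) \<ge> p*q*\<theta>^3*K * \<theta> / e" .
  have th4: "\<theta>^4 = \<theta> * \<theta>^3" by (simp add: power4_eq_xxxx power3_eq_cube)
  have X: "p*q*\<theta>^3*K * \<theta> / e = p*q*\<theta>^4*K / e" unfolding th4 by (simp add: mult_ac)
  have LHS2: "LHS \<ge> p*q*\<theta>^4*K / e" using LHSge Y unfolding X by linarith
  have CZ: "C * Z < p*q*\<theta>^4*K / e"
  proof -
    have "C * Z \<le> C * (1 + 1/e)" using zt(2) C unfolding Z_def by (intro mult_left_mono) auto
    also have "\<dots> = C * (1 + e) / e" using e(1) by (simp add: field_simps)
    also have "\<dots> < (C / \<theta>) / e"
    proof -
      have "C * (1 + e) < C * (1/\<theta>)" using e(3) C by (intro mult_strict_left_mono) auto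
      then have "C * (1 + e) < C / \<theta>" by simp
      then show ?thesis by (rule divide_strict_right_mono) (use e(1) in simp)
    qed
    also have "\<dots> < p*q*\<theta>^4*K / e"
    proof -
      have th5e: "\<theta> ^ 5 = \<theta> * \<theta> ^ 4" by (simp add: eval_nat_numeral)
      have "C < \<theta> * (\<theta> ^ 4 * (p * q * K))" using Cth unfolding th5e by (simp add: mult_ac)
      then have "C / \<theta> < \<theta> ^ 4 * (p * q * K)"
        using th0 by (simp add: divide_less_eq mult_ac)
      then show ?thesis using e(1) by (intro divide_strict_right_mono) (auto simp: mult_ac)
    qed
    finally show ?thesis .
  qed
  have "\<not> ineq1 k p q r s C a b"
  proof
    assume "ineq1 k p q r s C a b"
    then have lt: "infsum (\<lambda>(m,n). t1 a b m n) ({1..} \<times> {1..}) < C * Z"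
      unfolding ineq1_def Let_def t1_lam RHS by simp
    have "infsum (\<lambda>(m,n). t1 a b m n) ({1..} \<times> {1..}) = LHS" unfolding LHS_def by (rule core(2))
    then show False using lt LHS2 CZ by simp
  qed
  then show ?thesis using adma admb by blast
qed

lemma part4:
  assumes C: "0 < C" "C < (q * K) powr p"
  shows "\<exists>a. admissible p a \<and> \<not> ineq2 k p q r s C a"
proof -
  define C1 where "C1 = p * C powr (1/p)"
  have C1p: "C1 > 0" unfolding C1_def using C hp by simp
  have "C powr (1/p) < ((q * K) powr p) powr (1/p)" using C hp by (intro powr_less_mono2) auto
  also have "\<dots> = q * K" using q1 Kpos hp by (simp add: powr_powr)
  finally have "C1 < p * q * K" unfolding C1_def using hp by simp
  then obtain a b where ab: "admissible p a" "admissible q b" "\<not> ineq1 k p q r s C1 a b"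
    using part3[OF C1p] by blast
  have "\<not> ineq2 k p q r s C a"
  proof
    assume "ineq2 k p q r s C a"
    then have JC: "infsum (\<lambda>n. J a n powr p) {1..} < C * infsum (\<lambda>n. a n powr p) {1..}"
      unfolding ineq2_def Let_def J_def T2_def by simp
    have "ineq1 k p q r s (p * C powr (1/p)) a b" by (rule ineq1_from_J[OF ab(1) ab(2) C(1) JC])
    then show False using ab(3) unfolding C1_def by simp
  qed
  then show ?thesis using ab(1) by blast
qed

end

theorem theorem4p1:
  fixes p q lam r s :: real and k :: "real \<Rightarrow> real \<Rightarrow> real"
  assumes hp: "p > 1" and hpq: "1/p + 1/q = 1"
    and hlam: "lam > 0" and hrs: "r + s = lam"
    and kmeas: "set_borel_measurable lebesgue ({0<..} \<times> {0<..}) (\<lambda>z. k (fst z) (snd z))"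
    and kpos: "\<And>x y. x > 0 \<Longrightarrow> y > 0 \<Longrightarrow> k x y > 0"
    and khom: "\<And>u x y. u > 0 \<Longrightarrow> x > 0 \<Longrightarrow> y > 0 \<Longrightarrow> k (u * x) (u * y) = u powr (- lam) * k x y"
    and kint_fin: "set_integrable lborel {0<..} (\<lambda>u. k u 1 * u powr (r - 1))"
    and kint_pos: "kint k r > 0"
    and mono1: "decr_strict_somewhere (\<lambda>u. k u 1 * u powr (r - 1))"
    and mono2: "decr_strict_somewhere (\<lambda>u. k 1 u * u powr (s - 1))"
  shows "(\<forall>a b. admissible p a \<and> admissible q b \<longrightarrow> ineq1 k p q r s (p * q * kint k r) a b)
       \<and> (\<forall>a. admissible p a \<longrightarrow> ineq2 k p q r s ((q * kint k r) powr p) a)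
       \<and> (\<forall>C. 0 < C \<and> C < p * q * kint k r \<longrightarrow>
             (\<exists>a b. admissible p a \<and> admissible q b \<and> \<not> ineq1 k p q r s C a b))
       \<and> (\<forall>C. 0 < C \<and> C < (q * kint k r) powr p \<longrightarrow>
             (\<exists>a. admissible p a \<and> \<not> ineq2 k p q r s C a))"
proof -
  interpret kern p q lam r s k
    by (intro kern.intro) (use hp hpq hrs kpos khom kint_fin kint_pos mono1 mono2 in auto)
  show ?thesis
  proof (intro conjI allI impI)
    fix a b assume "admissible p a \<and> admissible q b"
    then show "ineq1 k p q r s (p * q * kint k r) a b" using part1 by blast
  next
    fix a assume "admissible p a"
    then show "ineq2 k p q r s ((q * kint k r) powr p) a" using part2 by blast
  next
    fix C assume "0 < C \<and> C < p * q * kint k r"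
    then show "\<exists>a b. admissible p a \<and> admissible q b \<and> \<not> ineq1 k p q r s C a b" using part3 by blast
  next
    fix C assume "0 < C \<and> C < (q * kint k r) powr p"
    then show "\<exists>a. admissible p a \<and> \<not> ineq2 k p q r s C a" using part4 by blast
  qed
qed

end
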